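(* Let $m,\gamma,\sigma>0$, let $W$ be a standard one-dimensional Wiener process, and let $V_t$ solve $m\,dV_t=-\gamma V_t\,dt+\sigma\,dW_t$ with deterministic initial condition $V_0=v$, and set $K_t=\tfrac12 m V_t^2$. If the initial kinetic energy $K_0=\tfrac12 m v^2$ is positive, then $\mathbb{E}[\inf\{t>0:K_t=0\}]<\infty$; in particular $K_t$ becomes zero in finite time almost surely. *)

theory Defs
  imports "HOL-Probability.Probability"
begin

definition wiener_process :: "'a measure \<Rightarrow> (real \<Rightarrow> 'a \<Rightarrow> real) \<Rightarrow> bool" where
  "wiener_process M W \<longleftrightarrow>
     prob_space M \<and>
     (\<forall>t\<ge>0. W t \<in> borel_measurable M) \<and>
     (\<forall>\<omega>\<in>space M. W 0 \<omega> = 0) \<and>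
     (\<forall>\<omega>\<in>space M. continuous_on {0..} (\<lambda>t. W t \<omega>)) \<and>
     (\<forall>s t. 0 \<le> s \<and> s < t \<longrightarrow>
        distributed M lborel (\<lambda>\<omega>. W t \<omega> - W s \<omega>) (normal_density 0 (sqrt (t - s)))) \<and>
     (\<forall>ts :: real list. sorted_wrt (<) ts \<and> (\<forall>t\<in>set ts. 0 \<le> t) \<longrightarrow>
        prob_space.indep_vars M (\<lambda>_. borel) (\<lambda>i \<omega>. W (ts ! Suc i) \<omega> - W (ts ! i) \<omega>)
          {..<length ts - 1})"

text \<open>Pathwise (strong) solution of the additive-noise SDE  m dV = -\<gamma> V dt + \<sigma> dW,
V 0 = v, written in integral form  m V t = m v - \<gamma> \<integral>_0^t V s ds + \<sigma> W t
(no stochastic integral is needed because the noise is additive), with continuous paths.\<close>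

definition langevin_solution ::
  "'a measure \<Rightarrow> real \<Rightarrow> real \<Rightarrow> real \<Rightarrow> real \<Rightarrow> (real \<Rightarrow> 'a \<Rightarrow> real) \<Rightarrow> (real \<Rightarrow> 'a \<Rightarrow> real) \<Rightarrow> bool"
  where
  "langevin_solution M m \<gamma> \<sigma> v W V \<longleftrightarrow>
     (\<forall>\<omega>\<in>space M. continuous_on {0..} (\<lambda>t. V t \<omega>) \<and>
        (\<forall>t\<ge>0. m * V t \<omega> = m * v - \<gamma> * integral {0..t} (\<lambda>s. V s \<omega>) + \<sigma> * W t \<omega>))"

text \<open>First time after 0 at which a process K vanishes, valued in [0,\<infinity>]
(the infimum of the empty set is \<infinity>).\<close>

definition first_zero_time :: "(real \<Rightarrow> 'a \<Rightarrow> real) \<Rightarrow> 'a \<Rightarrow> ennreal" where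
  "first_zero_time K \<omega> = Inf (ennreal ` {t. t > 0 \<and> K t \<omega> = 0})"

end

theory Submission
  imports Defs
begin


lemma integral_split_pieces:
  fixes g :: "real \<Rightarrow> real"
  assumes d: "d > 0" and cont: "continuous_on {a..a + real k * d} g"
  shows "integral {a..a + real k * d} g = (\<Sum>i<k. integral {a + real i * d..a + real (Suc i) * d} g)"
  using cont
proof (induction k)
  case 0
  then show ?case by simp
next
  case (Suc k)
  have sub: "{a..a + real k * d} \<subseteq> {a..a + real (Suc k) * d}" using d by auto
  have IH: "integral {a..a + real k * d} g = (\<Sum>i<k. integral {a + real i * d..a + real (Suc i) * d} g)"
    using Suc.IH Suc.prems continuous_on_subset[OF _ sub] by blast
  have "integral {a..a + real k * d} g + integral {a + real k * d..a + real (Suc k) * d} g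
        = integral {a..a + real (Suc k) * d} g"
    by (rule Henstock_Kurzweil_Integration.integral_combine) (use d Suc.prems in \<open>simp_all add: integrable_continuous_real\<close>)
  then show ?case using IH by simp
qed

lemma piece_bound:
  fixes g :: "real \<Rightarrow> real"
  assumes d: "d > 0" and cont: "continuous_on {p..p + d} g"
    and osc: "\<And>r. r \<in> {p..p+d} \<Longrightarrow> \<bar>g r - g p\<bar> \<le> \<eta>"
  shows "\<bar>integral {p..p+d} g - d * g p\<bar> \<le> d * \<eta>"
proof -
  have int: "g integrable_on {p..p+d}" using cont by (rule integrable_continuous_real)
  have "integral {p..p+d} g \<le> integral {p..p+d} (\<lambda>r. g p + \<eta>)"
    by (rule integral_le[OF int]) (use osc in \<open>force simp: abs_le_iff\<close>)+
  moreover have "integral {p..p+d} (\<lambda>r. g p - \<eta>) \<le> integral {p..p+d} g"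
    by (rule integral_le[OF _ int]) (use osc in \<open>force simp: abs_le_iff\<close>)+
  ultimately show ?thesis using d by (auto simp: abs_le_iff algebra_simps)
qed

lemma riemann_bound:
  fixes g :: "real \<Rightarrow> real"
  assumes d: "d > 0" and cont: "continuous_on {a..a + real k * d} g"
    and osc: "\<And>i r. i < k \<Longrightarrow> r \<in> {a + real i * d..a + real (Suc i) * d} \<Longrightarrow> \<bar>g r - g (a + real i * d)\<bar> \<le> \<eta>"
  shows "\<bar>integral {a..a + real k * d} g - d * (\<Sum>i<k. g (a + real i * d))\<bar> \<le> real k * d * \<eta>"
proof -
  have "\<bar>integral {a..a + real k * d} g - d * (\<Sum>i<k. g (a + real i * d))\<bar>
      = \<bar>\<Sum>i<k. (integral {a + real i * d..a + real (Suc i) * d} g - d * g (a + real i * d))\<bar>"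
    by (simp add: integral_split_pieces[OF d cont] sum_subtractf sum_distrib_left)
  also have "\<dots> \<le> (\<Sum>i<k. \<bar>integral {a + real i * d..a + real (Suc i) * d} g - d * g (a + real i * d)\<bar>)"
    by (rule sum_abs)
  also have "\<dots> \<le> (\<Sum>i<k. d * \<eta>)"
  proof (rule sum_mono)
    fix i assume i: "i \<in> {..<k}"
    have eq: "a + real (Suc i) * d = (a + real i * d) + d" by (simp add: algebra_simps)
    have le: "real (Suc i) * d \<le> real k * d" using i d by (intro mult_right_mono) auto
    have ge: "0 \<le> real i * d" using d by simp
    have sub: "{a + real i * d..a + real i * d + d} \<subseteq> {a..a + real k * d}"
      using le ge by (auto simp: algebra_simps)
    show "\<bar>integral {a + real i * d..a + real (Suc i) * d} g - d * g (a + real i * d)\<bar> \<le> d * \<eta>"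
      unfolding eq
      by (rule piece_bound[OF d continuous_on_subset[OF cont sub]]) (use osc i eq in auto)
  qed
  finally show ?thesis by simp
qed



lemma block_ineq:
  fixes u x :: "real \<Rightarrow> real"
  assumes c: "c > 0" and h: "h > 0" and s: "s \<ge> 0"
    and cu: "continuous_on {0..s+h} u" and cx: "continuous_on {0..s+h} x"
    and eq: "\<And>t. t \<in> {0..s+h} \<Longrightarrow> u t = v - c * integral {0..t} u + x t"
    and pos: "\<And>r. r \<in> {s..s+h} \<Longrightarrow> u r \<ge> 0"
  shows "u (s+h) \<le> u s / (1+c*h) + (x (s+h) - x s) - c / (1+c*h) * integral {s..s+h} (\<lambda>r. x r - x s)"
proof -
  define Y where "Y t = u t - x t" for t
  have Yeq: "Y t = v - c * integral {0..t} u" if "t \<in> {0..s+h}" for t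
    using eq[OF that] by (simp add: Y_def)
  have intu: "u integrable_on {a..b}" if "0 \<le> a" "b \<le> s+h" for a b
    using continuous_on_subset[OF cu] that by (intro integrable_continuous_real) auto
  have intx: "x integrable_on {a..b}" if "0 \<le> a" "b \<le> s+h" for a b
    using continuous_on_subset[OF cx] that by (intro integrable_continuous_real) auto
  have split: "integral {0..r} u + integral {r..b} u = integral {0..b} u" if "0 \<le> r" "r \<le> b" "b \<le> s+h" for r b
    by (rule Henstock_Kurzweil_Integration.integral_combine) (use that intu in auto)
  have Ymono: "Y r \<ge> Y (s+h)" if r: "r \<in> {s..s+h}" for r
  proof -
    have "integral {r..s+h} u \<ge> 0"
      by (rule integral_nonneg) (use intu r s pos in auto)
    moreover have "Y r = v - c * integral {0..r} u" using Yeq r s by auto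
    moreover have "Y (s+h) = v - c * integral {0..s+h} u" using Yeq h s by auto
    moreover have "integral {0..s+h} u = integral {0..r} u + integral {r..s+h} u" using split[of r "s+h"] r s by auto
    ultimately have "Y (s+h) = Y r - c * integral {r..s+h} u"
      by (simp add: algebra_simps)
    then show ?thesis using \<open>integral {r..s+h} u \<ge> 0\<close> c by simp
  qed
  define I where "I = integral {s..s+h} u"
  define J where "J = integral {s..s+h} (\<lambda>r. x r - x s)"
  have YI: "Y (s+h) = Y s - c * I"
  proof -
    have "integral {0..s+h} u = integral {0..s} u + I" using split[of s "s+h"] s h by (simp add: I_def)
    then show ?thesis using Yeq[of s] Yeq[of "s+h"] s h by (simp add: algebra_simps)
  qed
  have intY: "(\<lambda>r. Y (s+h) + x s + (x r - x s)) integrable_on {s..s+h}"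
    using intx[of s "s+h"] s by (intro integrable_add integrable_diff) auto
  have "I \<ge> integral {s..s+h} (\<lambda>r. Y (s+h) + x s + (x r - x s))"
    unfolding I_def
  proof (rule integral_le[OF intY])
    show "u integrable_on {s..s+h}" using intu s by auto
    fix r assume r: "r \<in> {s..s+h}"
    show "Y (s+h) + x s + (x r - x s) \<le> u r" using Ymono[OF r] by (simp add: Y_def)
  qed
  also have "integral {s..s+h} (\<lambda>r. Y (s+h) + x s + (x r - x s)) = h * (Y (s+h) + x s) + J"
  proof -
    have "integral {s..s+h} (\<lambda>r. Y (s+h) + x s + (x r - x s))
        = integral {s..s+h} (\<lambda>r. Y (s+h) + x s) + integral {s..s+h} (\<lambda>r. x r - x s)"
      by (rule integral_add) (use intx[of s "s+h"] s in \<open>auto intro: integrable_diff\<close>)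
    then show ?thesis using h by (simp add: J_def)
  qed
  finally have IJ: "I \<ge> h * (Y (s+h) + x s) + J" .
  have key: "(1 + c*h) * Y (s+h) \<le> Y s - c*h * x s - c * J"
  proof -
    have "c * (h * (Y (s+h) + x s) + J) \<le> c * I" using IJ c by (intro mult_left_mono) auto
    then show ?thesis using YI by (simp add: algebra_simps)
  qed
  have pos1: "1 + c*h > 0" using c h by (simp add: add_pos_pos)
  have main: "(1 + c*h) * u (s+h) \<le> u s + (1+c*h) * (x (s+h) - x s) - c * J"
    using key by (simp add: Y_def algebra_simps)
  define X where "X = x (s+h) - x s"
  have eqR: "u s / (1+c*h) + X - c / (1+c*h) * J = (u s + (1+c*h) * X - c * J) / (1+c*h)"
  proof -
    have "(u s + (1+c*h) * X - c * J) / (1+c*h) = u s / (1+c*h) + (1+c*h) * X / (1+c*h) - c * J / (1+c*h)"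
      by (simp add: add_divide_distrib diff_divide_distrib)
    also have "(1+c*h) * X / (1+c*h) = X" using pos1 by simp
    also have "c * J / (1+c*h) = c / (1+c*h) * J" by simp
    finally show ?thesis by simp
  qed
  have "u (s+h) \<le> (u s + (1+c*h) * X - c * J) / (1+c*h)"
    using pos1 main unfolding X_def by (simp add: pos_le_divide_eq mult.commute)
  then show ?thesis unfolding J_def[symmetric] X_def[symmetric] eqR .
qed



lemma nn_integral_normal_density_1:
  assumes "\<sigma> > 0" shows "(\<integral>\<^sup>+y. ennreal (normal_density \<mu> \<sigma> y) \<partial>lborel) = 1"
proof -
  interpret P: prob_space "density lborel (normal_density \<mu> \<sigma>)"
    using prob_space_normal_density assms by blast
  have "emeasure (density lborel (normal_density \<mu> \<sigma>)) UNIV = 1"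
    using P.emeasure_space_1 by simp
  then show ?thesis by (simp add: emeasure_density)
qed

lemma normal_density_shift_exp:
  assumes "\<tau> > 0"
  shows "normal_density 0 \<tau> y * exp (x / \<tau>\<^sup>2 * (y - x)) = exp (- x\<^sup>2 / (2 * \<tau>\<^sup>2)) * normal_density x \<tau> y"
proof -
  have "- (y - 0)\<^sup>2 / (2 * \<tau>\<^sup>2) + x / \<tau>\<^sup>2 * (y - x) = - x\<^sup>2 / (2 * \<tau>\<^sup>2) + - (y - x)\<^sup>2 / (2 * \<tau>\<^sup>2)"
    using assms by (simp add: field_simps power2_eq_square)
  then show ?thesis
    unfolding normal_density_def by (simp add: exp_add[symmetric] mult_ac)
qed

lemma (in prob_space) gauss_upper:
  assumes Z: "distributed M lborel Z (normal_density 0 \<tau>)" and \<tau>: "\<tau> > 0" and x: "x \<ge> 0"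
  shows "prob {\<omega>\<in>space M. Z \<omega> > x} \<le> exp (- x\<^sup>2 / (2 * \<tau>\<^sup>2))"
proof -
  have Zm: "Z \<in> borel_measurable M" using distributed_measurable[OF Z] by simp
  define l where "l = x / \<tau>\<^sup>2"
  have l: "l \<ge> 0" using x \<tau> by (simp add: l_def)
  have "emeasure M {\<omega>\<in>space M. Z \<omega> > x} = (\<integral>\<^sup>+\<omega>. indicator {\<omega>\<in>space M. Z \<omega> > x} \<omega> \<partial>M)"
    using Zm by (intro nn_integral_indicator[symmetric]) measurable
  also have "\<dots> \<le> (\<integral>\<^sup>+\<omega>. ennreal (exp (l * (Z \<omega> - x))) \<partial>M)"
  proof (rule nn_integral_mono)
    fix \<omega> show "indicator {\<omega>\<in>space M. Z \<omega> > x} \<omega> \<le> ennreal (exp (l * (Z \<omega> - x)))"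
      using l by (auto simp: indicator_def)
  qed
  also have "\<dots> = (\<integral>\<^sup>+y. ennreal (normal_density 0 \<tau> y) * ennreal (exp (l * (y - x))) \<partial>lborel)"
    by (rule distributed_nn_integral[OF Z, symmetric]) measurable
  also have "\<dots> = (\<integral>\<^sup>+y. ennreal (exp (- x\<^sup>2 / (2 * \<tau>\<^sup>2))) * ennreal (normal_density x \<tau> y) \<partial>lborel)"
  proof (intro nn_integral_cong)
    fix y
    have "ennreal (normal_density 0 \<tau> y) * ennreal (exp (l * (y - x)))
        = ennreal (normal_density 0 \<tau> y * exp (l * (y - x)))"
      by (simp add: ennreal_mult')
    also have "\<dots> = ennreal (exp (- x\<^sup>2 / (2 * \<tau>\<^sup>2)) * normal_density x \<tau> y)"
      using normal_density_shift_exp[OF \<tau>, of y x] by (simp add: l_def)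
    also have "\<dots> = ennreal (exp (- x\<^sup>2 / (2 * \<tau>\<^sup>2))) * ennreal (normal_density x \<tau> y)"
      by (simp add: ennreal_mult')
    finally show "ennreal (normal_density 0 \<tau> y) * ennreal (exp (l * (y - x)))
        = ennreal (exp (- x\<^sup>2 / (2 * \<tau>\<^sup>2))) * ennreal (normal_density x \<tau> y)" .
  qed
  also have "\<dots> = ennreal (exp (- x\<^sup>2 / (2 * \<tau>\<^sup>2)))"
    by (subst nn_integral_cmult) (auto simp: nn_integral_normal_density_1[OF \<tau>])
  finally show ?thesis
    by (simp add: emeasure_eq_measure)
qed

lemma (in prob_space) gauss_lower:
  assumes Z: "distributed M lborel Z (normal_density 0 \<tau>)" and \<tau>: "\<tau> > 0" and y: "y \<ge> 0"
  shows "prob {\<omega>\<in>space M. Z \<omega> \<le> - y} \<ge> normal_density 0 \<tau> (y + 1)"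
proof -
  have Zm: "Z \<in> borel_measurable M" using distributed_measurable[OF Z] by simp
  have "emeasure M {\<omega>\<in>space M. Z \<omega> \<le> - y} = emeasure (distr M lborel Z) {..-y}"
    using Zm by (subst emeasure_distr) (auto intro!: arg_cong[where f="emeasure M"])
  also have "\<dots> = emeasure (density lborel (normal_density 0 \<tau>)) {..-y}"
    using Z by (simp add: distributed_def)
  also have "\<dots> = (\<integral>\<^sup>+t. ennreal (normal_density 0 \<tau> t) * indicator {..-y} t \<partial>lborel)"
    by (simp add: emeasure_density)
  also have "\<dots> \<ge> (\<integral>\<^sup>+t. ennreal (normal_density 0 \<tau> (y+1)) * indicator {-y-1..-y} t \<partial>lborel)"
  proof (rule nn_integral_mono)
    fix t
    show "ennreal (normal_density 0 \<tau> (y+1)) * indicator {-y-1..-y} t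
        \<le> ennreal (normal_density 0 \<tau> t) * indicator {..-y} t"
    proof (cases "t \<in> {-y-1..-y}")
      case True
      then have "t\<^sup>2 \<le> (y+1)\<^sup>2" using y by (auto intro!: power2_le_iff_abs_le[THEN iffD2] simp: abs_if)
      then have "normal_density 0 \<tau> (y+1) \<le> normal_density 0 \<tau> t"
        using \<tau> unfolding normal_density_def
        by (auto intro!: mult_left_mono divide_right_mono simp: field_simps)
      then show ?thesis using True by (auto simp: indicator_def intro: ennreal_leI)
    qed (auto simp: indicator_def)
  qed
  also have "(\<integral>\<^sup>+t. ennreal (normal_density 0 \<tau> (y+1)) * indicator {-y-1..-y} t \<partial>lborel)
      = ennreal (normal_density 0 \<tau> (y+1))"
    by (simp add: nn_integral_cmult_indicator)
  finally show ?thesis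
    by (simp add: emeasure_eq_measure)
qed



lemma linear_solution:
  fixes u w :: "real \<Rightarrow> real"
  assumes c: "c > 0" and cu: "continuous_on {0..} u" and cw: "continuous_on {0..} w"
    and eq: "\<And>t. t \<ge> 0 \<Longrightarrow> u t = v - c * integral {0..t} u + w t"
    and t: "t \<ge> 0"
  shows "u t = w t + exp (- c * t) * (v - c * integral {0..t} (\<lambda>r. exp (c * r) * w r))"
proof -
  define F where "F \<tau> = exp (c*\<tau>) * (v - c * integral {0..\<tau>} u) + c * integral {0..\<tau>} (\<lambda>r. exp (c*r) * w r)" for \<tau>
  have cut: "continuous_on {0..t} u" using continuous_on_subset[OF cu] by auto
  have cwt: "continuous_on {0..t} (\<lambda>r. exp (c*r) * w r)"
    using continuous_on_subset[OF cw] by (auto intro!: continuous_intros)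
  have "(F has_field_derivative 0) (at \<tau> within {0..t})" if \<tau>: "\<tau> \<in> {0..t}" for \<tau>
  proof -
    have d1: "((\<lambda>\<tau>. integral {0..\<tau>} u) has_field_derivative u \<tau>) (at \<tau> within {0..t})"
      using integral_has_vector_derivative[OF cut \<tau>] by (simp only: add: has_real_derivative_iff_has_vector_derivative)
    have d2: "((\<lambda>\<tau>. integral {0..\<tau>} (\<lambda>r. exp (c*r) * w r)) has_field_derivative exp (c*\<tau>) * w \<tau>) (at \<tau> within {0..t})"
      using integral_has_vector_derivative[OF cwt \<tau>] by (simp only: add: has_real_derivative_iff_has_vector_derivative)
    have "(F has_field_derivative (exp (c*\<tau>) * c * (v - c * integral {0..\<tau>} u) + exp (c*\<tau>) * (- (c * u \<tau>)) + c * (exp (c*\<tau>) * w \<tau>))) (at \<tau> within {0..t})"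
      unfolding F_def
      by (intro DERIV_add DERIV_mult DERIV_diff DERIV_cmult d1 d2 DERIV_const)
         (auto intro!: derivative_eq_intros d1 d2 simp del: exp_times_arg_commute)
    moreover have "exp (c*\<tau>) * c * (v - c * integral {0..\<tau>} u) + exp (c*\<tau>) * (- (c * u \<tau>)) + c * (exp (c*\<tau>) * w \<tau>) = 0"
    proof -
      have e: "v + w \<tau> - (u \<tau> + c * integral {0..\<tau>} u) = 0" using eq[of \<tau>] \<tau> by simp
      have "exp (c*\<tau>) * c * (v - c * integral {0..\<tau>} u) + exp (c*\<tau>) * (- (c * u \<tau>)) + c * (exp (c*\<tau>) * w \<tau>)
          = c * exp (c*\<tau>) * (v + w \<tau> - (u \<tau> + c * integral {0..\<tau>} u))"
        by (simp add: algebra_simps)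
      then show ?thesis using e by simp
    qed
    ultimately show ?thesis by simp
  qed
  then obtain k where k: "\<And>\<tau>. \<tau> \<in> {0..t} \<Longrightarrow> F \<tau> = k"
    using has_field_derivative_zero_constant[of "{0..t}" F] by auto
  have "F t = F 0" using k t by auto
  then have "exp (c*t) * (v - c * integral {0..t} u) = v - c * integral {0..t} (\<lambda>r. exp (c*r) * w r)"
    by (simp add: F_def algebra_simps)
  then have "v - c * integral {0..t} u = exp (- c * t) * (v - c * integral {0..t} (\<lambda>r. exp (c*r) * w r))"
    by (metis (no_types, lifting) exp_minus_inverse mult.assoc mult.left_neutral mult_minus_left)
  then show ?thesis using eq[OF t] by simp
qed

lemma riemann_tendsto:
  fixes g :: "real \<Rightarrow> real"
  assumes t: "t > 0" and cont: "continuous_on {0..t} g"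
  shows "(\<lambda>n. (t / real (Suc n)) * (\<Sum>i<Suc n. g (0 + real i * (t / real (Suc n))))) \<longlonglongrightarrow> integral {0..t} g"
proof (rule LIMSEQ_I)
  fix r :: real assume r: "r > 0"
  have uc: "uniformly_continuous_on {0..t} g"
    using compact_uniformly_continuous[OF cont] by simp
  obtain \<delta> where \<delta>: "\<delta> > 0" and \<delta>g: "\<And>x x'. x \<in> {0..t} \<Longrightarrow> x' \<in> {0..t} \<Longrightarrow> dist x' x < \<delta> \<Longrightarrow> dist (g x') (g x) < r / (2*t)"
    using uc[unfolded uniformly_continuous_on_def, rule_format, of "r/(2*t)"] r t by auto
  obtain no :: nat where no: "t / \<delta> < real no" using reals_Archimedean2 by blast
  show "\<exists>no. \<forall>n\<ge>no. norm ((t / real (Suc n)) * (\<Sum>i<Suc n. g (0 + real i * (t / real (Suc n)))) - integral {0..t} g) < r"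
  proof (intro exI allI impI)
    fix n assume n: "n \<ge> no"
    define d where "d = t / real (Suc n)"
    have d: "d > 0" using t by (simp add: d_def)
    have kd: "0 + real (Suc n) * d = t" by (simp add: d_def)
    have "t / \<delta> < real (Suc n)" using no n by linarith
    then have d\<delta>: "d < \<delta>" using t \<delta> by (simp add: d_def field_simps)
    have cont': "continuous_on {0..0 + real (Suc n) * d} g" using cont kd by simp
    have "\<bar>integral {0..0 + real (Suc n) * d} g - d * (\<Sum>i<Suc n. g (0 + real i * d))\<bar> \<le> real (Suc n) * d * (r / (2*t))"
    proof (rule riemann_bound[OF d cont'])
      fix i x assume i: "i < Suc n" and x: "x \<in> {0 + real i * d..0 + real (Suc i) * d}"
      have "real (Suc i) * d \<le> real (Suc n) * d" using i d by (intro mult_right_mono) auto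
      have "0 \<le> real i * d" using d by simp
      then have xin: "x \<in> {0..t}" "real i * d \<in> {0..t}" using x d kd \<open>real (Suc i) * d \<le> real (Suc n) * d\<close>
        by (auto simp del: of_nat_Suc) (use \<open>0 \<le> real i * d\<close> in linarith)
      have "dist x (real i * d) < \<delta>" using x d\<delta> by (auto simp: dist_real_def algebra_simps)
      then show "\<bar>g x - g (0 + real i * d)\<bar> \<le> r / (2*t)"
        using \<delta>g[OF xin(2) xin(1)] by (simp add: dist_real_def)
    qed
    also have "real (Suc n) * d * (r / (2*t)) = r/2" using t by (simp add: d_def)
    finally have B: "\<bar>integral {0..0 + real (Suc n) * d} g - d * (\<Sum>i<Suc n. g (0 + real i * d))\<bar> \<le> r/2" .
    show "norm ((t / real (Suc n)) * (\<Sum>i<Suc n. g (0 + real i * (t / real (Suc n)))) - integral {0..t} g) < r"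
      unfolding d_def[symmetric] using B kd r by (simp only: real_norm_def abs_minus_commute)
  qed
qed

lemma measurable_path_integral:
  fixes f :: "real \<Rightarrow> 'a \<Rightarrow> real"
  assumes meas: "\<And>r. r \<in> {0..t} \<Longrightarrow> (\<lambda>\<omega>. f r \<omega>) \<in> borel_measurable M"
    and cont: "\<And>\<omega>. \<omega> \<in> space M \<Longrightarrow> continuous_on {0..t} (\<lambda>r. f r \<omega>)"
    and t: "t \<ge> 0"
  shows "(\<lambda>\<omega>. integral {0..t} (\<lambda>r. f r \<omega>)) \<in> borel_measurable M"
proof (cases "t = 0")
  case True then show ?thesis by simp
next
  case False
  then have t: "t > 0" using t by simp
  show ?thesis
  proof (rule borel_measurable_LIMSEQ_real)
    fix \<omega> assume "\<omega> \<in> space M"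
    then show "(\<lambda>n. (t / real (Suc n)) * (\<Sum>i<Suc n. f (0 + real i * (t / real (Suc n))) \<omega>)) \<longlonglongrightarrow> integral {0..t} (\<lambda>r. f r \<omega>)"
      using riemann_tendsto[OF t cont] by simp
  next
    fix n
    have "0 + real i * (t / real (Suc n)) \<in> {0..t}" if "i < Suc n" for i
    proof -
      have "t * real i \<le> t * real (Suc n)" using that t by (intro mult_left_mono) auto
      then show ?thesis using t by (auto simp: field_simps)
    qed
    then show "(\<lambda>\<omega>. (t / real (Suc n)) * (\<Sum>i<Suc n. f (0 + real i * (t / real (Suc n))) \<omega>)) \<in> borel_measurable M"
      by (intro borel_measurable_times borel_measurable_const borel_measurable_sum meas) auto
  qed
qed



lemma sum_block: "(\<Sum>l\<in>{k*n..<k*n+n}. g l) = (\<Sum>i<n. g (k*n+i :: nat))"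
proof -
  have "(\<Sum>l\<in>{k*n..<k*n+n}. g l) = (\<Sum>l\<in>{0+k*n..<n+k*n}. g l)"
    by (simp add: add.commute)
  also have "\<dots> = (\<Sum>i\<in>{0..<n}. g (i + k*n))"
    by (rule sum.shift_bounds_nat_ivl)
  finally show ?thesis by (simp add: lessThan_atLeast0 add.commute)
qed

lemma (in prob_space) block_sums:
  fixes D :: "nat \<Rightarrow> 'a \<Rightarrow> real"
  assumes ind: "indep_vars (\<lambda>_. borel) D {..<N*n}" and n: "n \<ge> 1"
    and dist: "\<And>l. distributed M lborel (D l) (normal_density 0 \<sigma>0)" and \<sigma>0: "\<sigma>0 > 0"
    and \<alpha>: "\<And>i. i < n \<Longrightarrow> \<alpha> i \<noteq> 0"
  shows "indep_vars (\<lambda>_. borel) (\<lambda>k \<omega>. \<Sum>i<n. \<alpha> i * D (k*n+i) \<omega>) {..<N}"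
    and "k < N \<Longrightarrow> distributed M lborel (\<lambda>\<omega>. \<Sum>i<n. \<alpha> i * D (k*n+i) \<omega>)
            (normal_density 0 (sqrt (\<Sum>i<n. (\<bar>\<alpha> i\<bar> * \<sigma>0)\<^sup>2)))"
proof -
  define K where "K k = {k*n..<k*n+n}" for k
  have sumeq: "(\<Sum>i<n. \<alpha> i * D (k*n+i) \<omega>) = (\<Sum>l\<in>K k. \<alpha> (l - k*n) * D l \<omega>)" for k \<omega>
    unfolding K_def sum_block by simp
  have Ksub: "K k \<subseteq> {..<N*n}" if "k < N" for k
  proof -
    have "k*n + n \<le> N*n" using that by (metis Suc_leI add.commute mult_Suc mult_le_mono1)
    then show ?thesis by (auto simp: K_def)
  qed
  have disj: "disjoint_family_on K {..<N}"
  proof (unfold disjoint_family_on_def, intro ballI impI)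
    fix k k' :: nat assume "k \<noteq> k'"
    then consider "k < k'" | "k' < k" by linarith
    then show "K k \<inter> K k' = {}"
    proof cases
      case 1
      then have "k*n + n \<le> k'*n" by (metis Suc_leI add.commute mult_Suc mult_le_mono1)
      then show ?thesis by (auto simp: K_def)
    next
      case 2
      then have "k'*n + n \<le> k*n" by (metis Suc_leI add.commute mult_Suc mult_le_mono1)
      then show ?thesis by (auto simp: K_def)
    qed
  qed
  have R: "indep_vars (\<lambda>k. PiM (K k) (\<lambda>_. borel)) (\<lambda>k \<omega>. restrict (\<lambda>l. D l \<omega>) (K k)) {..<N}"
    by (rule indep_vars_restrict[OF ind Ksub disj]) auto
  have R2: "indep_vars (\<lambda>_. borel) (\<lambda>k \<omega>. (\<lambda>f. \<Sum>l\<in>K k. \<alpha> (l - k*n) * f l) (restrict (\<lambda>l. D l \<omega>) (K k))) {..<N}"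
    by (rule indep_vars_compose2[OF R]) (auto intro!: borel_measurable_sum borel_measurable_times measurable_component_singleton)
  show "indep_vars (\<lambda>_. borel) (\<lambda>k \<omega>. \<Sum>i<n. \<alpha> i * D (k*n+i) \<omega>) {..<N}"
    using R2 by (subst indep_vars_cong[where Y="\<lambda>k \<omega>. (\<lambda>f. \<Sum>l\<in>K k. \<alpha> (l - k*n) * f l) (restrict (\<lambda>l. D l \<omega>) (K k))" and N'="\<lambda>_. borel" and J="{..<N}"])
      (auto simp: sumeq intro!: sum.cong)
  assume k: "k < N"
  have indK: "indep_vars (\<lambda>_. borel) (\<lambda>l \<omega>. \<alpha> (l - k*n) * D l \<omega>) (K k)"
    by (rule indep_vars_compose2[OF indep_vars_subset[OF ind Ksub[OF k]], where Y="\<lambda>l x. \<alpha> (l - k*n) * x"]) auto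
  have dK: "distributed M lborel (\<lambda>\<omega>. \<alpha> (l - k*n) * D l \<omega>) (normal_density 0 (\<bar>\<alpha> (l - k*n)\<bar> * \<sigma>0))" if "l \<in> K k" for l
  proof -
    have "\<alpha> (l - k*n) \<noteq> 0" using that \<alpha> by (auto simp: K_def)
    from normal_density_affine[OF dist \<sigma>0 this, of 0] show ?thesis by simp
  qed
  have "distributed M lborel (\<lambda>\<omega>. \<Sum>l\<in>K k. \<alpha> (l - k*n) * D l \<omega>)
      (normal_density (\<Sum>l\<in>K k. 0) (sqrt (\<Sum>l\<in>K k. (\<bar>\<alpha> (l - k*n)\<bar> * \<sigma>0)\<^sup>2)))"
    by (rule sum_indep_normal[OF _ _ indK]) (use n \<alpha> \<sigma>0 dK in \<open>auto simp: K_def\<close>)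
  moreover have "(\<Sum>l\<in>K k. (\<bar>\<alpha> (l - k*n)\<bar> * \<sigma>0)\<^sup>2) = (\<Sum>i<n. (\<bar>\<alpha> i\<bar> * \<sigma>0)\<^sup>2)"
    unfolding K_def sum_block by simp
  ultimately show "distributed M lborel (\<lambda>\<omega>. \<Sum>i<n. \<alpha> i * D (k*n+i) \<omega>)
            (normal_density 0 (sqrt (\<Sum>i<n. (\<bar>\<alpha> i\<bar> * \<sigma>0)\<^sup>2)))"
    by (simp add: sumeq)
qed

lemma (in prob_space) event_bound:
  fixes G :: "nat \<Rightarrow> 'a \<Rightarrow> real"
  assumes ind: "indep_vars (\<lambda>_. borel) G {..<N}" and N: "N \<ge> 1"
    and dist: "\<And>k. k < N \<Longrightarrow> distributed M lborel (G k) (normal_density 0 \<tau>)"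
    and \<tau>1: "\<tau>1 > 0" "\<tau>1 \<le> \<tau>" and \<tau>2: "\<tau> \<le> \<tau>2" and \<theta>: "\<theta> \<ge> 0" and y: "y \<ge> 0"
  shows "prob {\<omega>\<in>space M. (\<exists>k<N. G k \<omega> > \<theta>) \<or> (\<forall>k<N. G k \<omega> > - y)}
     \<le> real N * exp (- \<theta>\<^sup>2 / (2 * \<tau>2\<^sup>2)) + exp (- real N * (exp (- (y+1)\<^sup>2 / (2 * \<tau>1\<^sup>2)) / (\<tau>2 * sqrt (2*pi))))"
proof -
  have \<tau>: "\<tau> > 0" using \<tau>1 by linarith
  have Gm: "G k \<in> borel_measurable M" if "k < N" for k
    using distributed_measurable[OF dist[OF that]] by simp
  define A where "A k = {\<omega>\<in>space M. G k \<omega> > \<theta>}" for k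
  define B where "B k = G k -` {-y<..} \<inter> space M" for k
  have Aev: "A k \<in> events" if "k < N" for k using Gm[OF that] unfolding A_def by measurable
  have Bev: "B k \<in> events" if "k < N" for k using Gm[OF that] unfolding B_def by measurable
  have sub: "{\<omega>\<in>space M. (\<exists>k<N. G k \<omega> > \<theta>) \<or> (\<forall>k<N. G k \<omega> > - y)} \<subseteq> (\<Union>k\<in>{..<N}. A k) \<union> (\<Inter>k\<in>{..<N}. B k)"
    using N by (auto simp: A_def B_def)
  have "prob {\<omega>\<in>space M. (\<exists>k<N. G k \<omega> > \<theta>) \<or> (\<forall>k<N. G k \<omega> > - y)} \<le> prob ((\<Union>k\<in>{..<N}. A k) \<union> (\<Inter>k\<in>{..<N}. B k))"
  proof (rule finite_measure_mono[OF sub])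
    have "(\<Union>k\<in>{..<N}. A k) \<in> events" using Aev by auto
    moreover have "(\<Inter>k\<in>{..<N}. B k) \<in> events" using Bev N by (intro sets.finite_INT) (auto simp: lessThan_empty_iff)
    ultimately show "(\<Union>k\<in>{..<N}. A k) \<union> (\<Inter>k\<in>{..<N}. B k) \<in> events" by auto
  qed
  also have "\<dots> \<le> prob (\<Union>k\<in>{..<N}. A k) + prob (\<Inter>k\<in>{..<N}. B k)"
    by (rule measure_subadditive) (use Aev Bev N in \<open>auto intro!: sets.finite_INT simp: lessThan_empty_iff\<close>)
  also have "prob (\<Union>k\<in>{..<N}. A k) \<le> (\<Sum>k<N. prob (A k))"
    by (rule finite_measure_subadditive_finite) (use Aev in auto)
  also have "(\<Sum>k<N. prob (A k)) \<le> (\<Sum>k<N. exp (- \<theta>\<^sup>2 / (2 * \<tau>2\<^sup>2)))"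
  proof (rule sum_mono)
    fix k assume k: "k \<in> {..<N}"
    have "prob (A k) \<le> exp (- \<theta>\<^sup>2 / (2 * \<tau>\<^sup>2))"
      unfolding A_def using gauss_upper[OF dist \<tau> \<theta>] k by simp
    also have "\<dots> \<le> exp (- \<theta>\<^sup>2 / (2 * \<tau>2\<^sup>2))"
    proof -
      have "\<tau>\<^sup>2 \<le> \<tau>2\<^sup>2" using \<tau> \<tau>2 by (intro power_mono) auto
      moreover have "\<tau>2 > 0" using \<tau> \<tau>2 by linarith
      ultimately have "\<theta>\<^sup>2 / (2 * \<tau>2\<^sup>2) \<le> \<theta>\<^sup>2 / (2 * \<tau>\<^sup>2)" using \<tau> by (intro divide_left_mono) auto
      then show ?thesis by simp
    qed
    finally show "prob (A k) \<le> exp (- \<theta>\<^sup>2 / (2 * \<tau>2\<^sup>2))" .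
  qed
  also have "prob (\<Inter>k\<in>{..<N}. B k) = (\<Prod>k<N. prob (B k))"
    unfolding B_def by (rule indep_varsD[OF ind]) (use N in \<open>auto simp: lessThan_empty_iff\<close>)
  also have "(\<Prod>k<N. prob (B k)) \<le> (\<Prod>k<N. exp (- (exp (- (y+1)\<^sup>2 / (2 * \<tau>1\<^sup>2)) / (\<tau>2 * sqrt (2*pi)))))"
  proof (rule prod_mono, intro conjI)
    fix k assume k: "k \<in> {..<N}"
    show "0 \<le> prob (B k)" by simp
    have "space M - {\<omega>\<in>space M. G k \<omega> \<le> - y} = B k" by (auto simp: B_def)
    then have "prob (B k) = 1 - prob {\<omega>\<in>space M. G k \<omega> \<le> - y}"
      using prob_compl[of "{\<omega>\<in>space M. G k \<omega> \<le> - y}"] Gm k by (auto simp: measurable)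
    also have "prob {\<omega>\<in>space M. G k \<omega> \<le> - y} \<ge> normal_density 0 \<tau> (y + 1)"
      using gauss_lower[OF dist \<tau> y] k by simp
    moreover have "normal_density 0 \<tau> (y + 1) \<ge> exp (- (y+1)\<^sup>2 / (2 * \<tau>1\<^sup>2)) / (\<tau>2 * sqrt (2*pi))"
    proof -
      have s: "sqrt (2 * pi * \<tau>\<^sup>2) = \<tau> * sqrt (2*pi)" using \<tau> by (simp add: real_sqrt_mult)
      have "exp (- (y+1)\<^sup>2 / (2 * \<tau>1\<^sup>2)) \<le> exp (- (y+1)\<^sup>2 / (2 * \<tau>\<^sup>2))"
      proof -
        have "\<tau>1\<^sup>2 \<le> \<tau>\<^sup>2" using \<tau>1 by (intro power_mono) auto
        then have "(y+1)\<^sup>2 / (2 * \<tau>\<^sup>2) \<le> (y+1)\<^sup>2 / (2 * \<tau>1\<^sup>2)" using \<tau>1 by (intro divide_left_mono) auto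
        then show ?thesis by simp
      qed
      moreover have "\<tau> * sqrt (2*pi) \<le> \<tau>2 * sqrt (2*pi)" using \<tau>2 by simp
      ultimately have "exp (- (y+1)\<^sup>2 / (2 * \<tau>1\<^sup>2)) / (\<tau>2 * sqrt (2*pi)) \<le> exp (- (y+1)\<^sup>2 / (2 * \<tau>\<^sup>2)) / (\<tau> * sqrt (2*pi))"
        using \<tau> by (intro frac_le) auto
      also have "\<dots> = normal_density 0 \<tau> (y + 1)"
        unfolding normal_density_def s by simp
      finally show ?thesis .
    qed
    ultimately have "prob (B k) \<le> 1 - exp (- (y+1)\<^sup>2 / (2 * \<tau>1\<^sup>2)) / (\<tau>2 * sqrt (2*pi))" by linarith
    also have "\<dots> \<le> exp (- (exp (- (y+1)\<^sup>2 / (2 * \<tau>1\<^sup>2)) / (\<tau>2 * sqrt (2*pi))))"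
      using exp_ge_add_one_self[of "- (exp (- (y+1)\<^sup>2 / (2 * \<tau>1\<^sup>2)) / (\<tau>2 * sqrt (2*pi)))"] by simp
    finally show "prob (B k) \<le> exp (- (exp (- (y+1)\<^sup>2 / (2 * \<tau>1\<^sup>2)) / (\<tau>2 * sqrt (2*pi))))" .
  qed
  also have "(\<Prod>k<N. exp (- (exp (- (y+1)\<^sup>2 / (2 * \<tau>1\<^sup>2)) / (\<tau>2 * sqrt (2*pi)))))
      = exp (- real N * (exp (- (y+1)\<^sup>2 / (2 * \<tau>1\<^sup>2)) / (\<tau>2 * sqrt (2*pi))))"
    by (simp add: exp_of_nat_mult[symmetric])
  finally show ?thesis by simp
qed



lemma exp_ge_pow4: fixes x :: real assumes "x \<ge> 0" shows "x^4 / 256 \<le> exp x"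
proof -
  have "(x/4)^4 \<le> (1 + x/4)^4" using assms by (intro power_mono) auto
  also have "(1 + x/4) \<le> exp (x/4)" by (rule exp_ge_add_one_self)
  then have "(1 + x/4)^4 \<le> exp (x/4) ^ 4" using assms by (intro power_mono) auto
  also have "exp (x/4) ^ 4 = exp x" by (simp add: exp_of_nat_mult[symmetric])
  finally show ?thesis by (simp add: power_divide)
qed

lemma final_analytic:
  fixes N :: nat and \<tau>2 V0 :: real
  assumes \<tau>2: "\<tau>2 > 0" and N: "N \<ge> 1" and V0: "V0 \<ge> 0"
  defines "L \<equiv> 1 + V0 + \<tau>2 * sqrt (6 * ln (real N + 2))"
  defines "A \<equiv> (1 + V0) / 6 + 2"
  defines "C0 \<equiv> exp (- 3 * A\<^sup>2 / \<tau>2\<^sup>2) / (\<tau>2 * sqrt (2*pi))"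
  shows "real N * exp (- (L-1)\<^sup>2 / (2 * \<tau>2\<^sup>2))
         + exp (- real N * (exp (- (L/6 + 2)\<^sup>2 / (2 * (\<tau>2 / sqrt 3)\<^sup>2)) / (\<tau>2 * sqrt (2*pi))))
       \<le> (1 + 2304 / C0^4) / (real N)\<^sup>2"
proof -
  define x where "x = real N"
  have x1: "x \<ge> 1" using N by (simp add: x_def)
  define l where "l = ln (x + 2)"
  have l0: "l \<ge> 0" using x1 by (simp add: l_def)
  have C0: "C0 > 0" using \<tau>2 by (simp add: C0_def)
  have "(L-1)\<^sup>2 \<ge> (\<tau>2 * sqrt (6 * l))\<^sup>2"
    using V0 \<tau>2 l0 by (intro power_mono) (auto simp: L_def l_def x_def)
  also have "(\<tau>2 * sqrt (6 * l))\<^sup>2 = \<tau>2\<^sup>2 * (6 * l)" using l0 by (simp add: power_mult_distrib)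
  finally have "- (L-1)\<^sup>2 / (2 * \<tau>2\<^sup>2) \<le> - 3 * l" using \<tau>2 by (simp add: field_simps)
  then have "exp (- (L-1)\<^sup>2 / (2 * \<tau>2\<^sup>2)) \<le> exp (- 3 * l)" by simp
  also have "exp (- 3 * l) = 1 / (x+2)^3"
  proof -
    have "exp (3 * l) = exp l ^ 3" using exp_of_nat_mult[of 3 l] by simp
    also have "exp l = x + 2" using x1 by (simp add: l_def)
    finally show ?thesis by (simp add: exp_minus inverse_eq_divide)
  qed
  finally have t1: "x * exp (- (L-1)\<^sup>2 / (2 * \<tau>2\<^sup>2)) \<le> x / (x+2)^3"
    using x1 by (simp add: divide_simps)
  have "x / (x+2)^3 \<le> 1 / x\<^sup>2"
  proof -
    have "x^3 \<le> (x+2)^3" using x1 by (intro power_mono) auto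
    then have a: "x * x\<^sup>2 \<le> (x+2)^3" by (simp add: power3_eq_cube power2_eq_square)
    have pos: "(x+2)^3 > 0" "x\<^sup>2 > 0" using x1 by auto
    show ?thesis using a pos by (simp add: divide_simps mult.commute)
  qed
  with t1 have T1: "x * exp (- (L-1)\<^sup>2 / (2 * \<tau>2\<^sup>2)) \<le> 1 / x\<^sup>2" by linarith
  define q where "q = \<tau>2 * sqrt (6 * l) / 6"
  have Lq: "L/6 + 2 = A + q" by (simp add: L_def A_def q_def l_def x_def field_simps)
  have q2: "q\<^sup>2 = \<tau>2\<^sup>2 * l / 6" using l0 by (simp add: q_def power_mult_distrib power_divide)
  have "(A + q)\<^sup>2 \<le> 2 * A\<^sup>2 + 2 * q\<^sup>2"
  proof -
    have "0 \<le> (A - q)\<^sup>2" by simp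
    then show ?thesis unfolding power2_sum power2_diff by linarith
  qed
  then have "(L/6 + 2)\<^sup>2 / (2 * (\<tau>2 / sqrt 3)\<^sup>2) \<le> (2 * A\<^sup>2 + 2 * q\<^sup>2) / (2 * (\<tau>2 / sqrt 3)\<^sup>2)"
    using \<tau>2 Lq by (intro divide_right_mono) auto
  also have "\<dots> = 3 * A\<^sup>2 / \<tau>2\<^sup>2 + l / 2" using \<tau>2 unfolding q2 by (simp add: power_divide field_simps)
  finally have "exp (- (L/6 + 2)\<^sup>2 / (2 * (\<tau>2 / sqrt 3)\<^sup>2)) \<ge> exp (- 3 * A\<^sup>2 / \<tau>2\<^sup>2 - l / 2)" by simp
  also have "exp (- 3 * A\<^sup>2 / \<tau>2\<^sup>2 - l / 2) = exp (- 3 * A\<^sup>2 / \<tau>2\<^sup>2) / sqrt (x + 2)"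
  proof -
    have "sqrt (x+2) = exp (l/2)" using x1 by (simp add: l_def powr_half_sqrt[symmetric] powr_def)
    then show ?thesis by (simp add: exp_diff)
  qed
  finally have "exp (- (L/6 + 2)\<^sup>2 / (2 * (\<tau>2 / sqrt 3)\<^sup>2)) / (\<tau>2 * sqrt (2*pi)) \<ge> C0 / sqrt (x+2)"
    using \<tau>2 by (simp add: C0_def divide_right_mono field_simps)
  then have "x * (C0 / sqrt (x+2)) \<le> x * (exp (- (L/6 + 2)\<^sup>2 / (2 * (\<tau>2 / sqrt 3)\<^sup>2)) / (\<tau>2 * sqrt (2*pi)))"
    using x1 by (intro mult_left_mono) auto
  then have "exp (- x * (exp (- (L/6 + 2)\<^sup>2 / (2 * (\<tau>2 / sqrt 3)\<^sup>2)) / (\<tau>2 * sqrt (2*pi)))) \<le> exp (- (x * (C0 / sqrt (x+2))))"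
    by simp
  also have "\<dots> \<le> 256 / (x * (C0 / sqrt (x+2)))^4"
  proof -
    define z where "z = x * (C0 / sqrt (x+2))"
    have z: "z > 0" using x1 C0 by (simp add: z_def)
    have "z^4/256 \<le> exp z" using exp_ge_pow4 z by simp
    then have "exp (- z) \<le> 256 / z^4" using z by (simp add: exp_minus divide_simps mult.commute)
    then show ?thesis unfolding z_def .
  qed
  also have "256 / (x * (C0 / sqrt (x+2)))^4 = 256 * (x+2)\<^sup>2 / (x^4 * C0^4)"
  proof -
    have "sqrt (x+2) ^ 4 = (sqrt (x+2) ^ 2) ^ 2" by (simp flip: power_mult)
    also have "\<dots> = (x+2)\<^sup>2" using x1 by simp
    finally have sq: "sqrt (x+2) ^ 4 = (x+2)\<^sup>2" .
    have "(x * (C0 / sqrt (x+2)))^4 = x^4 * C0^4 / (x+2)\<^sup>2"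
      by (simp add: power_mult_distrib power_divide sq)
    then show ?thesis using x1 C0 by simp
  qed
  also have "\<dots> \<le> 256 * (9 * x\<^sup>2) / (x^4 * C0^4)"
  proof -
    have xx: "1 * x \<le> x * x" using x1 by (intro mult_right_mono) auto
    have e1: "(x+2)\<^sup>2 = x*x + 4*x + 4" by (simp add: power2_eq_square algebra_simps)
    have e2: "9 * x\<^sup>2 = 9 * (x*x)" by (simp add: power2_eq_square)
    have "(x+2)\<^sup>2 \<le> 9 * x\<^sup>2" unfolding e1 e2 using xx x1 by linarith
    then show ?thesis using x1 C0 by (intro divide_right_mono mult_left_mono) auto
  qed
  also have "\<dots> = (2304 / C0^4) / x\<^sup>2" using x1 C0 by (simp add: field_simps power2_eq_square power4_eq_xxxx)
  finally have T2: "exp (- x * (exp (- (L/6 + 2)\<^sup>2 / (2 * (\<tau>2 / sqrt 3)\<^sup>2)) / (\<tau>2 * sqrt (2*pi)))) \<le> (2304 / C0^4) / x\<^sup>2" .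
  have "(1 + 2304 / C0^4) / x\<^sup>2 = 1 / x\<^sup>2 + (2304 / C0^4) / x\<^sup>2" by (simp add: add_divide_distrib)
  with T1 T2 show ?thesis unfolding x_def by linarith
qed



lemma chain_kill:
  fixes U g :: "nat \<Rightarrow> real"
  assumes U0: "U 0 \<le> L" and step: "\<And>k. k < N \<Longrightarrow> U (Suc k) \<le> U k / 12 + g k + 1"
    and pos: "\<And>k. k \<le> N \<Longrightarrow> U k > 0"
  shows "(\<exists>k<N. g k > L - 1) \<or> (\<forall>k<N. g k > - (L/6) - 1)"
proof (cases "\<exists>k<N. g k > L - 1")
  case True then show ?thesis by blast
next
  case False
  then have g: "\<And>k. k < N \<Longrightarrow> g k \<le> L - 1" using not_less by blast
  have L: "L > 0" using U0 pos[of 0] by linarith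
  have bound: "k \<le> N \<Longrightarrow> U k \<le> 2 * L" for k
  proof (induction k)
    case 0 then show ?case using U0 L by simp
  next
    case (Suc k)
    then have "U k \<le> 2 * L" by simp
    then show ?case using step[of k] g[of k] Suc.prems L by simp
  qed
  have "\<forall>k<N. g k > - (L/6) - 1"
  proof (intro allI impI)
    fix k assume k: "k < N"
    have "0 < U (Suc k)" using pos[of "Suc k"] k by simp
    also have "\<dots> \<le> U k / 12 + g k + 1" using step[OF k] .
    finally show "g k > - (L/6) - 1" using bound[of k] k by simp
  qed
  then show ?thesis by blast
qed

lemma zero_set_char:
  fixes f :: "real \<Rightarrow> real"
  assumes cont: "continuous_on {0..q} f" and f0: "f 0 \<noteq> 0"
  shows "(\<exists>t\<in>{0..q}. f t = 0) \<longleftrightarrow>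
     (\<forall>n::nat. \<exists>p::rat. 0 \<le> real_of_rat p \<and> real_of_rat p \<le> q \<and> \<bar>f (real_of_rat p)\<bar> < 1 / real (Suc n))"
proof
  assume "\<exists>t\<in>{0..q}. f t = 0"
  then obtain t0 where t0: "t0 \<in> {0..q}" "f t0 = 0" by blast
  have t0p: "t0 > 0" using t0 f0 by (cases "t0 = 0") auto
  show "\<forall>n::nat. \<exists>p::rat. 0 \<le> real_of_rat p \<and> real_of_rat p \<le> q \<and> \<bar>f (real_of_rat p)\<bar> < 1 / real (Suc n)"
  proof
    fix n :: nat
    obtain d where d: "d > 0" and dd: "\<And>x'. x' \<in> {0..q} \<Longrightarrow> dist x' t0 < d \<Longrightarrow> dist (f x') (f t0) < 1 / real (Suc n)"
      using cont[unfolded continuous_on_iff] t0(1) by (metis of_nat_0_less_iff zero_less_Suc divide_pos_pos zero_less_one)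
    obtain r where r: "r \<in> \<rat>" "max 0 (t0 - d) < r" "r < t0"
      using Rats_dense_in_real[of "max 0 (t0 - d)" t0] t0p d by auto
    obtain p where p: "r = real_of_rat p" using r(1) Rats_cases by blast
    have "r \<in> {0..q}" using r t0 by auto
    moreover have "dist r t0 < d" using r by (auto simp: dist_real_def)
    ultimately have "\<bar>f r\<bar> < 1 / real (Suc n)" using dd t0 by (auto simp: dist_real_def)
    then show "\<exists>p::rat. 0 \<le> real_of_rat p \<and> real_of_rat p \<le> q \<and> \<bar>f (real_of_rat p)\<bar> < 1 / real (Suc n)"
      using \<open>r \<in> {0..q}\<close> p by auto
  qed
next
  assume H: "\<forall>n::nat. \<exists>p::rat. 0 \<le> real_of_rat p \<and> real_of_rat p \<le> q \<and> \<bar>f (real_of_rat p)\<bar> < 1 / real (Suc n)"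
  then obtain p0 :: rat where "0 \<le> real_of_rat p0" "real_of_rat p0 \<le> q" by blast
  then have q: "q \<ge> 0" by linarith
  have cabs: "continuous_on {0..q} (\<lambda>t. \<bar>f t\<bar>)" using cont by (intro continuous_intros)
  obtain t0 where t0: "t0 \<in> {0..q}" and mn: "\<And>y. y \<in> {0..q} \<Longrightarrow> \<bar>f t0\<bar> \<le> \<bar>f y\<bar>"
    using continuous_attains_inf[OF compact_Icc _ cabs] q by auto
  have "f t0 = 0"
  proof (rule ccontr)
    assume "f t0 \<noteq> 0"
    then obtain n0 :: nat where n0: "n0 > 0" "inverse (real n0) < \<bar>f t0\<bar>"
      using ex_inverse_of_nat_less[of "\<bar>f t0\<bar>"] by auto
    define n where "n = n0 - 1"
    have "Suc n = n0" using n0 by (simp add: n_def)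
    then have n: "inverse (real (Suc n)) < \<bar>f t0\<bar>" using n0 by simp
    obtain p :: rat where "0 \<le> real_of_rat p" "real_of_rat p \<le> q" "\<bar>f (real_of_rat p)\<bar> < 1 / real (Suc n)"
      using H by blast
    then show False using mn[of "real_of_rat p"] n by (auto simp: inverse_eq_divide)
  qed
  then show "\<exists>t\<in>{0..q}. f t = 0" using t0 by blast
qed

lemma measurable_first_zero:
  fixes f :: "real \<Rightarrow> 'a \<Rightarrow> real"
  assumes meas: "\<And>t. t \<ge> 0 \<Longrightarrow> f t \<in> borel_measurable M"
    and cont: "\<And>\<omega>. \<omega> \<in> space M \<Longrightarrow> continuous_on {0..} (\<lambda>t. f t \<omega>)"
    and f0: "\<And>\<omega>. \<omega> \<in> space M \<Longrightarrow> f 0 \<omega> \<noteq> 0"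
  shows "(\<lambda>\<omega>. Inf (ennreal ` {t. t > 0 \<and> f t \<omega> = 0})) \<in> borel_measurable M"
proof (rule borel_measurableI_less)
  fix y :: ennreal
  define g where "g p \<omega> = f (max 0 (real_of_rat p)) \<omega>" for p \<omega>
  have gm[measurable]: "g p \<in> borel_measurable M" for p unfolding g_def by (rule meas) simp
  define S where "S q = {\<omega>\<in>space M. \<forall>n::nat. \<exists>p::rat. 0 \<le> real_of_rat p \<and> real_of_rat p \<le> q \<and> \<bar>g p \<omega>\<bar> < 1 / real (Suc n)}" for q
  have Sm: "S q \<in> sets M" for q unfolding S_def by measurable
  have Seq: "\<omega> \<in> S q \<longleftrightarrow> \<omega> \<in> space M \<and> (\<exists>t\<in>{0..q}. f t \<omega> = 0)" if q: "q \<ge> 0" for q \<omega>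
  proof (cases "\<omega> \<in> space M")
    case True
    have c: "continuous_on {0..q} (\<lambda>t. f t \<omega>)" using continuous_on_subset[OF cont[OF True]] by auto
    show ?thesis using zero_set_char[OF c f0[OF True]] True unfolding S_def g_def
      by (auto simp: max_def)
  qed (auto simp: S_def)
  have "{\<omega>\<in>space M. Inf (ennreal ` {t. t > 0 \<and> f t \<omega> = 0}) < y}
      = (\<Union>q\<in>{q::rat. 0 \<le> real_of_rat q \<and> ennreal (real_of_rat q) < y}. S (real_of_rat q))"
  proof (intro set_eqI iffI)
    fix \<omega> assume "\<omega> \<in> {\<omega>\<in>space M. Inf (ennreal ` {t. t > 0 \<and> f t \<omega> = 0}) < y}"
    then have \<omega>: "\<omega> \<in> space M" and "Inf (ennreal ` {t. t > 0 \<and> f t \<omega> = 0}) < y" by auto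
    then obtain t where t: "t > 0" "f t \<omega> = 0" "ennreal t < y" by (auto simp: Inf_less_iff)
    have "\<exists>q::rat. t \<le> real_of_rat q \<and> ennreal (real_of_rat q) < y"
    proof (cases y)
      case (real r)
      then have "t < r" using t by (auto simp: ennreal_less_iff)
      then obtain x where x: "x \<in> \<rat>" "t < x" "x < r" using Rats_dense_in_real by blast
      then obtain q where "x = real_of_rat q" using Rats_cases by blast
      then show ?thesis using x t real by (intro exI[of _ q]) (auto intro!: ennreal_lessI)
    next
      case top
      obtain k :: nat where "t \<le> real k" using real_arch_simple by blast
      then show ?thesis using top by (intro exI[of _ "of_nat k"]) auto
    qed
    then obtain q :: rat where q: "t \<le> real_of_rat q" "ennreal (real_of_rat q) < y" by blast
    have q0: "0 \<le> real_of_rat q" using q t by linarith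
    have "\<omega> \<in> S (real_of_rat q)" using Seq[OF q0, of \<omega>] q t \<omega> by auto
    then show "\<omega> \<in> (\<Union>q\<in>{q::rat. 0 \<le> real_of_rat q \<and> ennreal (real_of_rat q) < y}. S (real_of_rat q))"
      using q t q0 by auto
  next
    fix \<omega> assume "\<omega> \<in> (\<Union>q\<in>{q::rat. 0 \<le> real_of_rat q \<and> ennreal (real_of_rat q) < y}. S (real_of_rat q))"
    then obtain q :: rat where q: "0 \<le> real_of_rat q" "ennreal (real_of_rat q) < y" "\<omega> \<in> S (real_of_rat q)" by auto
    then obtain t where t: "\<omega> \<in> space M" "t \<in> {0..real_of_rat q}" "f t \<omega> = 0" using Seq by blast
    have "t \<noteq> 0" using f0[OF t(1)] t by auto
    then have "t > 0" using t by auto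
    have "ennreal t \<le> ennreal (real_of_rat q)" using t by (auto intro: ennreal_leI)
    then have "ennreal t < y" using q(2) by (rule le_less_trans)
    then have "Inf (ennreal ` {t. t > 0 \<and> f t \<omega> = 0}) < y"
      using \<open>t > 0\<close> t by (auto simp: Inf_less_iff)
    then show "\<omega> \<in> {\<omega>\<in>space M. Inf (ennreal ` {t. t > 0 \<and> f t \<omega> = 0}) < y}" using t by auto
  qed
  also have "\<dots> \<in> sets M"
    by (intro sets.countable_UN' countable_Collect countable_rat) (auto simp: Sm)
  finally show "{\<omega>\<in>space M. Inf (ennreal ` {t. t > 0 \<and> f t \<omega> = 0}) < y} \<in> sets M" .
qed

lemma double_sum:
  fixes g :: "nat \<Rightarrow> real"
  shows "(\<Sum>i<n. \<Sum>l<i. g l) = (\<Sum>l<n. real (n - 1 - l) * g l)"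
proof (induction n)
  case 0 then show ?case by simp
next
  case (Suc n)
  have "(\<Sum>l<Suc n. real (Suc n - 1 - l) * g l) = (\<Sum>l<n. real (n - l) * g l)"
    by simp
  also have "\<dots> = (\<Sum>l<n. real (n - 1 - l) * g l + g l)"
    by (intro sum.cong) (auto simp: of_nat_diff algebra_simps)
  finally show ?case using Suc by (simp add: sum.distrib)
qed

lemma G_identity:
  fixes f :: "nat \<Rightarrow> real"
  assumes n: "n > 0"
  shows "(\<Sum>i<n. (E * (1 - 11/12 * real (n - 1 - i) / real n)) * (f (Suc (k*n+i)) - f (k*n+i)))
     = E * ((f (k*n+n) - f (k*n)) - 11 / (12 * real n) * (\<Sum>i<n. f (k*n+i) - f (k*n)))"
proof -
  define \<Delta> where "\<Delta> i = f (Suc (k*n+i)) - f (k*n+i)" for i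
  have tel: "f (k*n+i) - f (k*n) = (\<Sum>l<i. \<Delta> l)" for i
    using sum_lessThan_telescope[of "\<lambda>j. f (k*n+j)" i] by (simp add: \<Delta>_def)
  have eq1: "(\<Sum>i<n. f (k*n+i) - f (k*n)) = (\<Sum>l<n. real (n - 1 - l) * \<Delta> l)"
    by (simp add: tel double_sum)
  have eq2: "f (k*n+n) - f (k*n) = (\<Sum>l<n. \<Delta> l)" by (rule tel)
  have "E * ((f (k*n+n) - f (k*n)) - 11 / (12 * real n) * (\<Sum>i<n. f (k*n+i) - f (k*n)))
      = E * ((\<Sum>l<n. \<Delta> l) - 11 / (12 * real n) * (\<Sum>l<n. real (n - 1 - l) * \<Delta> l))"
    by (simp only: eq1 eq2)
  also have "\<dots> = (\<Sum>l<n. E * \<Delta> l - E * (11 / (12 * real n)) * (real (n - 1 - l) * \<Delta> l))"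
    by (simp add: sum_subtractf sum_distrib_left right_diff_distrib mult.assoc)
  also have "\<dots> = (\<Sum>l<n. (E * (1 - 11/12 * real (n - 1 - l) / real n)) * \<Delta> l)"
    by (rule sum.cong) (use n in \<open>auto simp: field_simps\<close>)
  finally show ?thesis by (simp add: \<Delta>_def)
qed

lemma wiener_grid:
  fixes W :: "real \<Rightarrow> 'a \<Rightarrow> real"
  assumes wp: "wiener_process M W" and d: "d > 0"
  shows "distributed M lborel (\<lambda>\<omega>. W (real (Suc l) * d) \<omega> - W (real l * d) \<omega>) (normal_density 0 (sqrt d))"
    and "prob_space.indep_vars M (\<lambda>_. borel) (\<lambda>l \<omega>. W (real (Suc l) * d) \<omega> - W (real l * d) \<omega>) {..<K}"
proof -
  interpret prob_space M using wp by (simp add: wiener_process_def)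
  have dist: "\<And>s t. 0 \<le> s \<Longrightarrow> s < t \<Longrightarrow> distributed M lborel (\<lambda>\<omega>. W t \<omega> - W s \<omega>) (normal_density 0 (sqrt (t - s)))"
    using wp by (simp add: wiener_process_def)
  have "real (Suc l) * d - real l * d = d" by (simp add: algebra_simps)
  then show "distributed M lborel (\<lambda>\<omega>. W (real (Suc l) * d) \<omega> - W (real l * d) \<omega>) (normal_density 0 (sqrt d))"
    using dist[of "real l * d" "real (Suc l) * d"] d by (simp add: algebra_simps)
  define ts where "ts = map (\<lambda>j. real j * d) [0..<Suc K]"
  have sorted: "sorted_wrt (<) ts"
    unfolding ts_def sorted_wrt_map
    by (rule sorted_wrt_mono_rel[OF _ sorted_wrt_upt]) (use d in auto)
  have nonneg: "\<forall>t\<in>set ts. 0 \<le> t" using d by (auto simp: ts_def)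
  have ind: "indep_vars (\<lambda>_. borel) (\<lambda>i \<omega>. W (ts ! Suc i) \<omega> - W (ts ! i) \<omega>) {..<length ts - 1}"
    using wp sorted nonneg by (simp add: wiener_process_def)
  show "indep_vars (\<lambda>_. borel) (\<lambda>l \<omega>. W (real (Suc l) * d) \<omega> - W (real l * d) \<omega>) {..<K}"
    using ind
    by (subst (asm) indep_vars_cong[where J="{..<K}" and Y="\<lambda>l \<omega>. W (real (Suc l) * d) \<omega> - W (real l * d) \<omega>" and N'="\<lambda>_. borel"])
       (auto simp: ts_def nth_append simp del: upt_Suc)
qed



lemma sum_sq_lower: "(\<Sum>i<n. (real (Suc i))\<^sup>2) \<ge> real n ^ 3 / 3"
proof (induction n)
  case 0 then show ?case by simp
next
  case (Suc n)
  have "real (Suc n) ^ 3 / 3 = real n ^ 3 / 3 + (real n)\<^sup>2 + real n + 1/3"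
    by (simp add: power3_eq_cube power2_eq_square algebra_simps)
  also have "\<dots> \<le> real n ^ 3 / 3 + (real (Suc n))\<^sup>2"
    by (simp add: power2_eq_square algebra_simps)
  also have "\<dots> \<le> (\<Sum>i<n. (real (Suc i))\<^sup>2) + (real (Suc n))\<^sup>2" using Suc by simp
  finally show ?case by simp
qed

lemma coef_bounds:
  assumes n: "n \<ge> 1" and i: "i < n"
  shows "real (Suc i) / real n \<le> 1 - 11/12 * real (n - 1 - i) / real n"
    and "1 - 11/12 * real (n - 1 - i) / real n \<le> 1"
proof -
  have rn: "real n > 0" using n by simp
  have r: "real (n - 1 - i) = real n - real (Suc i)" using i by (simp add: of_nat_diff)
  have a: "real (Suc i) / real n = 1 - real (n - 1 - i) / real n" using rn r by (simp add: field_simps)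
  have b: "0 \<le> real (n - 1 - i) / real n" by simp
  have c: "11/12 * real (n - 1 - i) / real n = 11/12 * (real (n - 1 - i) / real n)" by simp
  show "real (Suc i) / real n \<le> 1 - 11/12 * real (n - 1 - i) / real n"
    unfolding a c using b by linarith
  show "1 - 11/12 * real (n - 1 - i) / real n \<le> 1"
    unfolding c using b by linarith
qed

lemma coef_sum_bounds:
  assumes n: "n \<ge> 1"
  shows "real n / 3 \<le> (\<Sum>i<n. (1 - 11/12 * real (n - 1 - i) / real n)\<^sup>2)"
    and "(\<Sum>i<n. (1 - 11/12 * real (n - 1 - i) / real n)\<^sup>2) \<le> real n"
proof -
  have rn: "real n > 0" using n by simp
  have "(\<Sum>i<n. (1 - 11/12 * real (n - 1 - i) / real n)\<^sup>2) \<ge> (\<Sum>i<n. (real (Suc i) / real n)\<^sup>2)"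
    by (intro sum_mono power_mono coef_bounds(1)[OF n]) auto
  moreover have "(\<Sum>i<n. (real (Suc i) / real n)\<^sup>2) = (\<Sum>i<n. (real (Suc i))\<^sup>2) / (real n)\<^sup>2"
    by (simp add: power_divide sum_divide_distrib)
  moreover have "(\<Sum>i<n. (real (Suc i))\<^sup>2) / (real n)\<^sup>2 \<ge> (real n ^ 3 / 3) / (real n)\<^sup>2"
    using sum_sq_lower[of n] rn by (intro divide_right_mono) auto
  moreover have "(real n ^ 3 / 3) / (real n)\<^sup>2 = real n / 3" using rn by (simp add: power2_eq_square power3_eq_cube)
  ultimately show "real n / 3 \<le> (\<Sum>i<n. (1 - 11/12 * real (n - 1 - i) / real n)\<^sup>2)" by linarith
  have "(\<Sum>i<n. (1 - 11/12 * real (n - 1 - i) / real n)\<^sup>2) \<le> (\<Sum>i<n. 1)"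
  proof (rule sum_mono)
    fix i assume i: "i \<in> {..<n}"
    have a: "0 \<le> 1 - 11/12 * real (n - 1 - i) / real n"
    proof -
      have "0 \<le> real (Suc i) / real n" by simp
      then show ?thesis using coef_bounds(1)[OF n, of i] i by simp
    qed
    have "(1 - 11/12 * real (n - 1 - i) / real n)\<^sup>2 \<le> 1\<^sup>2"
      using a coef_bounds(2)[OF n, of i] i by (intro power_mono) auto
    then show "(1 - 11/12 * real (n - 1 - i) / real n)\<^sup>2 \<le> 1" by simp
  qed
  then show "(\<Sum>i<n. (1 - 11/12 * real (n - 1 - i) / real n)\<^sup>2) \<le> real n" by simp
qed

lemma main_lemma:
  fixes M :: "'a measure" and W V :: "real \<Rightarrow> 'a \<Rightarrow> real" and m \<gamma> \<sigma> v :: real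
  assumes m: "m > 0" and \<gamma>: "\<gamma> > 0" and \<sigma>: "\<sigma> > 0"
    and wp: "wiener_process M W"
    and ls: "langevin_solution M m \<gamma> \<sigma> v W V"
    and v: "v \<noteq> 0"
  shows "(\<lambda>\<omega>. Inf (ennreal ` {t. t > 0 \<and> V t \<omega> = 0})) \<in> borel_measurable M
    \<and> (\<integral>\<^sup>+\<omega>. Inf (ennreal ` {t. t > 0 \<and> V t \<omega> = 0}) \<partial>M) < \<infinity>"
proof -
  interpret prob_space M using wp by (simp add: wiener_process_def)
  define T where "T \<omega> = Inf (ennreal ` {t. t > 0 \<and> V t \<omega> = 0})" for \<omega>
  define c where "c = \<gamma> / m"
  define s where "s = \<sigma> / m"
  define e where "e = sgn v"
  define h where "h = 11 / c"
  have c: "c > 0" using m \<gamma> by (simp add: c_def)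
  have s: "s > 0" using m \<sigma> by (simp add: s_def)
  have h: "h > 0" using c by (simp add: h_def)
  have ch: "c * h = 11" using c by (simp add: h_def)
  have ev: "e * v = \<bar>v\<bar>" using v by (auto simp: e_def sgn_if)
  have e0: "e \<noteq> 0" "\<bar>e\<bar> = 1" using v by (auto simp: e_def sgn_if)
  have Wm: "\<And>t. t \<ge> 0 \<Longrightarrow> W t \<in> borel_measurable M" using wp by (simp add: wiener_process_def)
  have Wc: "\<And>\<omega>. \<omega> \<in> space M \<Longrightarrow> continuous_on {0..} (\<lambda>t. W t \<omega>)" using wp by (simp add: wiener_process_def)
  have Wcs: "continuous_on {0..b} (\<lambda>t. W t \<omega>)" if "\<omega> \<in> space M" for \<omega> b
    using continuous_on_subset[OF Wc[OF that]] by auto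
  have W0: "\<And>\<omega>. \<omega> \<in> space M \<Longrightarrow> W 0 \<omega> = 0" using wp by (simp add: wiener_process_def)
  have Vc: "\<And>\<omega>. \<omega> \<in> space M \<Longrightarrow> continuous_on {0..} (\<lambda>t. V t \<omega>)" using ls by (simp add: langevin_solution_def)
  have Veq: "V t \<omega> = v - c * integral {0..t} (\<lambda>r. V r \<omega>) + s * W t \<omega>" if \<omega>: "\<omega> \<in> space M" and t: "t \<ge> 0" for \<omega> t
  proof -
    have "m * V t \<omega> = m * v - \<gamma> * integral {0..t} (\<lambda>r. V r \<omega>) + \<sigma> * W t \<omega>"
      using ls \<omega> t by (simp add: langevin_solution_def)
    then show ?thesis using m unfolding c_def s_def by (simp add: field_simps)
  qed
  have V0: "V 0 \<omega> = v" if \<omega>: "\<omega> \<in> space M" for \<omega>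
    using Veq[OF \<omega>, of 0] W0[OF \<omega>] by simp
  have Vm: "V t \<in> borel_measurable M" if t: "t \<ge> 0" for t
  proof -
    have eq: "V t \<omega> = s * W t \<omega> + exp (- c * t) * (v - c * integral {0..t} (\<lambda>r. exp (c * r) * (s * W r \<omega>)))"
      if \<omega>: "\<omega> \<in> space M" for \<omega>
    proof -
      have cw: "continuous_on {0..} (\<lambda>t. s * W t \<omega>)" using Wc[OF \<omega>] by (intro continuous_intros)
      show ?thesis
        by (rule linear_solution[where u="\<lambda>t. V t \<omega>" and w="\<lambda>t. s * W t \<omega>", OF c Vc[OF \<omega>] cw _ t])
           (use Veq[OF \<omega>] in simp)
    qed
    have "(\<lambda>\<omega>. integral {0..t} (\<lambda>r. exp (c * r) * (s * W r \<omega>))) \<in> borel_measurable M"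
      by (rule measurable_path_integral[OF _ _ t]) (use Wm Wcs in \<open>auto intro!: continuous_intros\<close>)
    then have "(\<lambda>\<omega>. s * W t \<omega> + exp (- c * t) * (v - c * integral {0..t} (\<lambda>r. exp (c * r) * (s * W r \<omega>)))) \<in> borel_measurable M"
      using Wm[OF t] by measurable
    then show ?thesis by (subst measurable_cong[OF eq]) auto
  qed
  have Tm: "T \<in> borel_measurable M"
    unfolding T_def[abs_def] by (rule measurable_first_zero) (use Vm Vc V0 v in auto)
  have surv: "e * V r \<omega> > 0" if \<omega>: "\<omega> \<in> space M" and TZ: "T \<omega> > ennreal Z" and r: "r \<in> {0..Z}" for \<omega> Z r
  proof (rule ccontr)
    assume "\<not> e * V r \<omega> > 0"
    then have le: "e * V r \<omega> \<le> 0" by simp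
    have ge: "0 \<le> e * V 0 \<omega>" using V0[OF \<omega>] ev by simp
    have cont: "continuous_on {0..r} (\<lambda>t. e * V t \<omega>)"
      using Vc[OF \<omega>] by (auto intro!: continuous_intros intro: continuous_on_subset)
    obtain t where t: "0 \<le> t" "t \<le> r" "e * V t \<omega> = 0"
      using IVT2'[where f="\<lambda>t. e * V t \<omega>" and a=0 and b=r and y=0] le ge cont r by auto
    have Vt: "V t \<omega> = 0" using t e0 by simp
    have "t \<noteq> 0" using V0[OF \<omega>] v Vt by auto
    then have tp: "t > 0" using t by simp
    have "T \<omega> \<le> ennreal t" unfolding T_def using Vt tp by (intro Inf_lower) auto
    also have "ennreal t \<le> ennreal Z" using t r by (auto intro: ennreal_leI)
    finally show False using TZ by simp
  qed
  define \<tau>2 where "\<tau>2 = s * sqrt h"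
  have \<tau>2: "\<tau>2 > 0" using s h by (simp add: \<tau>2_def)
  define A0 where "A0 = (1 + \<bar>v\<bar>) / 6 + 2"
  define C0 where "C0 = exp (- 3 * A0\<^sup>2 / \<tau>2\<^sup>2) / (\<tau>2 * sqrt (2*pi))"
  define Cc where "Cc = 1 + 2304 / C0^4"
  have C0: "C0 > 0" using \<tau>2 by (simp add: C0_def)
  have Cc: "Cc \<ge> 1" using C0 by (simp add: Cc_def)
  have bnd: "emeasure M {\<omega>\<in>space M. T \<omega> > ennreal (real N * h)} \<le> ennreal (Cc / (real N)\<^sup>2)" if N: "N \<ge> 1" for N
  proof -
    define L where "L = 1 + \<bar>v\<bar> + \<tau>2 * sqrt (6 * ln (real N + 2))"
    have L1: "L - 1 \<ge> 0" using \<tau>2 N by (simp add: L_def)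
    have Lv: "\<bar>v\<bar> \<le> L" using \<tau>2 N by (simp add: L_def)
    define \<alpha> where "\<alpha> n i = e * s * (1 - 11/12 * real (n - 1 - i) / real n)" for n i :: nat
    define D where "D n l \<omega> = W (real (Suc l) * (h / real n)) \<omega> - W (real l * (h / real n)) \<omega>" for n l :: nat and \<omega>
    define G where "G n k \<omega> = (\<Sum>i<n. \<alpha> n i * D n (k*n+i) \<omega>)" for n k :: nat and \<omega>
    define E where "E n = {\<omega>\<in>space M. (\<exists>k<N. G n k \<omega> > L - 1) \<or> (\<forall>k<N. G n k \<omega> > - (L/6 + 1))}" for n
    define B where "B = real N * exp (- (L-1)\<^sup>2 / (2 * \<tau>2\<^sup>2))
         + exp (- real N * (exp (- (L/6 + 2)\<^sup>2 / (2 * (\<tau>2 / sqrt 3)\<^sup>2)) / (\<tau>2 * sqrt (2*pi))))"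
    have Ble: "B \<le> Cc / (real N)\<^sup>2"
      using final_analytic[OF \<tau>2 N, of "\<bar>v\<bar>"] unfolding B_def Cc_def C0_def A0_def L_def by simp
    have Dm[measurable]: "D n l \<in> borel_measurable M" for n l
      unfolding D_def using h by (intro borel_measurable_diff Wm) auto
    have Em: "E n \<in> sets M" for n unfolding E_def G_def by measurable
    have probE: "prob (E n) \<le> B" if n: "n \<ge> 1" for n
    proof -
      define d where "d = h / real n"
      have d: "d > 0" using h n by (simp add: d_def)
      have Dfun: "D n = (\<lambda>l \<omega>. W (real (Suc l) * d) \<omega> - W (real l * d) \<omega>)"
        by (simp add: fun_eq_iff D_def d_def)
      have Dd: "distributed M lborel (D n l) (normal_density 0 (sqrt d))" for l
        unfolding Dfun using wiener_grid(1)[OF wp d, of l] by simp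
      have Di: "indep_vars (\<lambda>_. borel) (D n) {..<N*n}"
        unfolding Dfun using wiener_grid(2)[OF wp d, of "N*n"] by simp
      have \<alpha>nz: "\<alpha> n i \<noteq> 0" if i: "i < n" for i
      proof -
        have "0 < real (Suc i) / real n" using n by simp
        then have "0 < 1 - 11/12 * real (n - 1 - i) / real n" using coef_bounds(1)[OF n i] by linarith
        then have p: "1 - 11/12 * real (n - 1 - i) / real n \<noteq> 0" by linarith
        have es: "e * s \<noteq> 0" using e0 s by simp
        show ?thesis unfolding \<alpha>_def using no_zero_divisors[OF es p] .
      qed
      have Gfun: "G n = (\<lambda>k \<omega>. \<Sum>i<n. \<alpha> n i * D n (k*n+i) \<omega>)" by (simp add: fun_eq_iff G_def)
      have sd: "sqrt d > 0" using d by simp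
      have BS1: "indep_vars (\<lambda>_. borel) (\<lambda>k \<omega>. \<Sum>i<n. \<alpha> n i * D n (k*n+i) \<omega>) {..<N}"
        using block_sums(1)[where \<alpha>="\<alpha> n" and D="D n", OF Di n Dd sd] \<alpha>nz by blast
      have BS2: "distributed M lborel (\<lambda>\<omega>. \<Sum>i<n. \<alpha> n i * D n (k*n+i) \<omega>)
            (normal_density 0 (sqrt (\<Sum>i<n. (\<bar>\<alpha> n i\<bar> * sqrt d)\<^sup>2)))" if "k < N" for k
        using block_sums(2)[where \<alpha>="\<alpha> n" and D="D n", OF Di n Dd sd] \<alpha>nz that by blast
      define \<tau> where "\<tau> = sqrt (\<Sum>i<n. (\<bar>\<alpha> n i\<bar> * sqrt d)\<^sup>2)"
      have indG: "indep_vars (\<lambda>_. borel) (G n) {..<N}" unfolding Gfun by (rule BS1)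
      have distG: "distributed M lborel (G n k) (normal_density 0 \<tau>)" if "k < N" for k
        unfolding Gfun \<tau>_def using BS2[OF that] by simp
      have \<tau>sq: "(\<Sum>i<n. (\<bar>\<alpha> n i\<bar> * sqrt d)\<^sup>2) = s\<^sup>2 * d * (\<Sum>i<n. (1 - 11/12 * real (n - 1 - i) / real n)\<^sup>2)"
      proof -
        have t: "(\<bar>\<alpha> n i\<bar> * sqrt d)\<^sup>2 = s\<^sup>2 * d * (1 - 11/12 * real (n - 1 - i) / real n)\<^sup>2" for i
        proof -
          have "\<bar>\<alpha> n i\<bar> = s * \<bar>1 - 11/12 * real (n - 1 - i) / real n\<bar>"
            unfolding \<alpha>_def using e0 s by (simp add: abs_mult)
          then show ?thesis using d by (simp add: power_mult_distrib)
        qed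
        show ?thesis by (simp add: t sum_distrib_left)
      qed
      have sdn: "s\<^sup>2 * d * real n = \<tau>2\<^sup>2" using n h by (simp add: d_def \<tau>2_def power_mult_distrib)
      have \<tau>up: "\<tau> \<le> \<tau>2"
      proof -
        have "s\<^sup>2 * d * (\<Sum>i<n. (1 - 11/12 * real (n - 1 - i) / real n)\<^sup>2) \<le> s\<^sup>2 * d * real n"
          using coef_sum_bounds(2)[OF n] d by (intro mult_left_mono) auto
        then have "(\<Sum>i<n. (\<bar>\<alpha> n i\<bar> * sqrt d)\<^sup>2) \<le> \<tau>2\<^sup>2" using \<tau>sq sdn by simp
        then have "\<tau> \<le> sqrt (\<tau>2\<^sup>2)" unfolding \<tau>_def by (rule real_sqrt_le_mono)
        then show ?thesis using \<tau>2 by simp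
      qed
      have \<tau>low: "\<tau>2 / sqrt 3 \<le> \<tau>"
      proof -
        have "s\<^sup>2 * d * (real n / 3) \<le> s\<^sup>2 * d * (\<Sum>i<n. (1 - 11/12 * real (n - 1 - i) / real n)\<^sup>2)"
          using coef_sum_bounds(1)[OF n] d by (intro mult_left_mono) auto
        moreover have "(\<tau>2 / sqrt 3)\<^sup>2 = s\<^sup>2 * d * (real n / 3)" using sdn by (simp add: power_divide)
        ultimately have "(\<tau>2 / sqrt 3)\<^sup>2 \<le> (\<Sum>i<n. (\<bar>\<alpha> n i\<bar> * sqrt d)\<^sup>2)" using \<tau>sq by simp
        then have "sqrt ((\<tau>2 / sqrt 3)\<^sup>2) \<le> \<tau>" unfolding \<tau>_def by (rule real_sqrt_le_mono)
        then show ?thesis using \<tau>2 by simp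
      qed
      have t1: "\<tau>2 / sqrt 3 > 0" using \<tau>2 by simp
      have "prob {\<omega>\<in>space M. (\<exists>k<N. G n k \<omega> > L - 1) \<or> (\<forall>k<N. G n k \<omega> > - (L/6 + 1))}
         \<le> real N * exp (- (L-1)\<^sup>2 / (2 * \<tau>2\<^sup>2)) + exp (- real N * (exp (- (L/6 + 1 + 1)\<^sup>2 / (2 * (\<tau>2 / sqrt 3)\<^sup>2)) / (\<tau>2 * sqrt (2*pi))))"
        by (rule event_bound[OF indG N distG t1 \<tau>low \<tau>up L1]) (use L1 in auto)
      also have "L/6 + 1 + 1 = L/6 + 2" by simp
      finally show ?thesis unfolding E_def B_def .
    qed
    have path: "\<exists>n0\<ge>1. \<forall>n\<ge>n0. \<omega> \<in> E n" if \<omega>: "\<omega> \<in> space M" and TN: "T \<omega> > ennreal (real N * h)" for \<omega>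
    proof -
      define u where "u t = e * V t \<omega>" for t
      define x where "x t = e * s * W t \<omega>" for t
      have upos: "u r > 0" if "r \<in> {0..real N * h}" for r
        unfolding u_def by (rule surv[OF \<omega> TN that])
      have ueq: "u t = \<bar>v\<bar> - c * integral {0..t} u + x t" if "t \<ge> 0" for t
      proof -
        have "integral {0..t} u = e * integral {0..t} (\<lambda>r. V r \<omega>)" by (simp add: u_def[abs_def])
        moreover have "e * V t \<omega> = e * (v - c * integral {0..t} (\<lambda>r. V r \<omega>) + s * W t \<omega>)"
          using Veq[OF \<omega> that] by simp
        moreover have "e * (v - c * integral {0..t} (\<lambda>r. V r \<omega>) + s * W t \<omega>)
            = e * v - c * (e * integral {0..t} (\<lambda>r. V r \<omega>)) + e * s * W t \<omega>"
          by (simp add: algebra_simps)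
        ultimately show ?thesis using ev by (simp add: u_def x_def)
      qed
      have uc: "continuous_on {0..} u" unfolding u_def using Vc[OF \<omega>] by (auto intro: continuous_intros)
      have xc: "continuous_on {0..} x" unfolding x_def using Wc[OF \<omega>] by (auto intro: continuous_intros)
      have "uniformly_continuous_on {0..real N * h} x"
        using compact_uniformly_continuous[OF continuous_on_subset[OF xc]] by auto
      then obtain \<delta> where \<delta>: "\<delta> > 0" and \<delta>x: "\<And>r r'. r \<in> {0..real N * h} \<Longrightarrow> r' \<in> {0..real N * h} \<Longrightarrow> dist r' r < \<delta> \<Longrightarrow> dist (x r') (x r) < 1"
        unfolding uniformly_continuous_on_def by (metis zero_less_one)
      obtain n1 :: nat where n1: "h / \<delta> < real n1" using reals_Archimedean2 by blast
      show ?thesis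
      proof (intro exI[of _ "Suc n1"] conjI allI impI)
        fix n assume nn: "Suc n1 \<le> n"
        have n: "n \<ge> 1" and npos: "real n > 0" using nn by auto
        define d where "d = h / real n"
        have d: "d > 0" using h npos by (simp add: d_def)
        have "h / \<delta> < real n" using n1 nn by linarith
        then have d\<delta>: "d < \<delta>" using \<delta> npos by (simp add: d_def field_simps)
        have nd: "real n * d = h" using npos by (simp add: d_def)
        define U where "U k = u (real k * h)" for k :: nat
        have step: "U (Suc k) \<le> U k / 12 + G n k \<omega> + 1" if k: "k < N" for k
        proof -
          define S where "S = real k * h"
          have S: "S \<ge> 0" using h by (simp add: S_def)
          have Sh: "S + h \<le> real N * h"
          proof -
            have "real (Suc k) * h \<le> real N * h" using k h by (intro mult_right_mono) auto
            then show ?thesis by (simp add: S_def algebra_simps)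
          qed
          have upos': "u r \<ge> 0" if "r \<in> {S..S+h}" for r
          proof -
            have "r \<in> {0..real N * h}" using that S Sh by auto
            then show ?thesis using upos by (simp add: less_imp_le)
          qed
          have ueq': "u t = \<bar>v\<bar> - c * integral {0..t} u + x t" if "t \<in> {0..S+h}" for t
            using ueq that by auto
          have cu': "continuous_on {0..S+h} u" using uc by (rule continuous_on_subset) auto
          have cx': "continuous_on {0..S+h} x" using xc by (rule continuous_on_subset) auto
          have BI: "u (S+h) \<le> u S / (1+c*h) + (x (S+h) - x S) - c / (1+c*h) * integral {S..S+h} (\<lambda>r. x r - x S)"
            by (rule block_ineq[OF c h S cu' cx' ueq' upos'])
          have contJ: "continuous_on {S..S + real n * d} (\<lambda>r. x r - x S)"
            using xc S by (auto intro!: continuous_intros intro: continuous_on_subset)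
          have RB: "\<bar>integral {S..S + real n * d} (\<lambda>r. x r - x S) - d * (\<Sum>i<n. x (S + real i * d) - x S)\<bar> \<le> real n * d * 1"
          proof (rule riemann_bound[OF d contJ])
            fix i r assume i: "i < n" and r: "r \<in> {S + real i * d..S + real (Suc i) * d}"
            have "real (Suc i) * d \<le> real n * d" using i d by (intro mult_right_mono) auto
            moreover have i0: "0 \<le> real i * d" using d by simp
            moreover have "real (Suc i) * d = real i * d + d" by (simp add: algebra_simps)
            ultimately have f1: "real (Suc i) * d \<le> real n * d" "0 \<le> real i * d" "real (Suc i) * d = real i * d + d"
              by auto
            have r1: "S + real i * d \<le> r" "r \<le> S + real (Suc i) * d" using r by auto
            have rin: "r \<in> {0..real N * h}" "S + real i * d \<in> {0..real N * h}"
              using f1 r1 S Sh nd d unfolding atLeastAtMost_iff by linarith+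
            have "dist r (S + real i * d) < \<delta>" using r d\<delta> by (auto simp: dist_real_def algebra_simps)
            then show "\<bar>(x r - x S) - (x (S + real i * d) - x S)\<bar> \<le> 1"
              using \<delta>x[OF rin(2) rin(1)] by (simp add: dist_real_def)
          qed
          have Geq: "G n k \<omega> = (x (S+h) - x S) - c / 12 * (d * (\<Sum>i<n. x (S + real i * d) - x S))"
          proof -
            define f where "f j = W (real j * d) \<omega>" for j
            have pts: "S + real i * d = real (k*n+i) * d" for i
              using nd by (simp add: S_def algebra_simps flip: nd)
            have ptsh: "S + h = real (k*n+n) * d" using pts[of n] nd by simp
            have "G n k \<omega> = (\<Sum>i<n. (e * s * (1 - 11/12 * real (n - 1 - i) / real n)) * (f (Suc (k*n+i)) - f (k*n+i)))"
              by (simp add: G_def \<alpha>_def D_def f_def d_def)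
            also have "\<dots> = e * s * ((f (k*n+n) - f (k*n)) - 11 / (12 * real n) * (\<Sum>i<n. f (k*n+i) - f (k*n)))"
              by (rule G_identity) (use n in auto)
            also have "\<dots> = (x (S+h) - x S) - c / 12 * (d * (\<Sum>i<n. x (S + real i * d) - x S))"
            proof -
              define P where "P = f (k*n+n) - f (k*n)"
              define Q where "Q = (\<Sum>i<n. f (k*n+i) - f (k*n))"
              have A1: "x (S+h) - x S = e * s * P"
                using pts[of 0] ptsh by (simp add: x_def f_def P_def algebra_simps)
              have A2: "(\<Sum>i<n. x (S + real i * d) - x S) = e * s * Q"
                using pts[of 0] by (simp add: x_def f_def Q_def pts sum_distrib_left algebra_simps)
              have A3: "c / 12 * d = 11 / (12 * real n)" using ch npos by (simp add: d_def field_simps)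
              have eqc: "c / 12 * (d * (e * s * Q)) = (c / 12 * d) * (e * s * Q)" by (simp only: mult.assoc)
              show ?thesis unfolding A1 A2 P_def[symmetric] Q_def[symmetric] eqc A3 by (simp add: algebra_simps)
            qed
            finally show ?thesis .
          qed
          have "u (S+h) \<le> u S / 12 + G n k \<omega> + c / 12 * h"
          proof -
            have J: "integral {S..S+h} (\<lambda>r. x r - x S) \<ge> d * (\<Sum>i<n. x (S + real i * d) - x S) - h"
              using RB nd by (simp add: abs_le_iff)
            have "c / 12 * (d * (\<Sum>i<n. x (S + real i * d) - x S) - h) \<le> c / 12 * integral {S..S+h} (\<lambda>r. x r - x S)"
              using J c by (intro mult_left_mono) auto
            then show ?thesis using BI Geq ch by (simp add: algebra_simps)
          qed
          also have "c / 12 * h \<le> 1" using ch by simp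
          finally have "u (S+h) \<le> u S / 12 + G n k \<omega> + 1" by simp
          moreover have "S + h = real (Suc k) * h" by (simp add: S_def algebra_simps)
          ultimately show ?thesis by (simp add: U_def S_def)
        qed
        have Upos: "U k > 0" if "k \<le> N" for k
        proof -
          have "real k * h \<le> real N * h" using that h by (intro mult_right_mono) auto
          then show ?thesis unfolding U_def using h by (intro upos) auto
        qed
        have U0: "U 0 \<le> L" using Lv ev V0[OF \<omega>] by (simp add: U_def u_def)
        from chain_kill[of U L N "\<lambda>k. G n k \<omega>", OF U0 step Upos]
        have "(\<exists>k<N. G n k \<omega> > L - 1) \<or> (\<forall>k<N. G n k \<omega> > - (L/6) - 1)" by blast
        then show "\<omega> \<in> E n" using \<omega> by (auto simp: E_def)
      qed simp
    qed
    define Aj where "Aj j = (\<Inter>n\<in>{Suc j..}. E n)" for j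
    have Ajm: "Aj j \<in> sets M" for j unfolding Aj_def using Em by (intro sets.countable_INT') auto
    have incA: "incseq Aj" unfolding incseq_def Aj_def by auto
    have sub: "{\<omega>\<in>space M. T \<omega> > ennreal (real N * h)} \<subseteq> (\<Union>j. Aj j)"
    proof
      fix \<omega> assume "\<omega> \<in> {\<omega>\<in>space M. T \<omega> > ennreal (real N * h)}"
      then obtain n0 where n0: "n0 \<ge> 1" "\<forall>n\<ge>n0. \<omega> \<in> E n" using path by blast
      then have "\<omega> \<in> Aj (n0 - 1)" by (auto simp: Aj_def)
      then show "\<omega> \<in> (\<Union>j. Aj j)" by blast
    qed
    have "emeasure M {\<omega>\<in>space M. T \<omega> > ennreal (real N * h)} \<le> emeasure M (\<Union>j. Aj j)"
      by (rule emeasure_mono[OF sub]) (use Ajm in auto)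
    also have "\<dots> = (SUP j. emeasure M (Aj j))"
      by (rule SUP_emeasure_incseq[symmetric]) (use Ajm incA in auto)
    also have "\<dots> \<le> ennreal B"
    proof (rule SUP_least)
      fix j
      have "emeasure M (Aj j) \<le> emeasure M (E (Suc j))"
        by (rule emeasure_mono) (auto simp: Aj_def Em)
      also have "\<dots> = ennreal (prob (E (Suc j)))" by (simp add: emeasure_eq_measure)
      also have "\<dots> \<le> ennreal B" using probE[of "Suc j"] by (intro ennreal_leI) auto
      finally show "emeasure M (Aj j) \<le> ennreal B" .
    qed
    also have "\<dots> \<le> ennreal (Cc / (real N)\<^sup>2)" using Ble by (intro ennreal_leI)
    finally show ?thesis .
  qed
  define b where "b N = 4 * Cc * inverse (real (Suc N) ^ 2)" for N
  have bsum: "summable b"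
  proof -
    have "summable (\<lambda>N. inverse (real N ^ 2))" by (rule inverse_power_summable) simp
    then have "summable (\<lambda>N. inverse (real (Suc N) ^ 2))" by (subst summable_Suc_iff)
    then show ?thesis unfolding b_def by (intro summable_mult)
  qed
  have b0: "b N \<ge> 0" for N using Cc by (simp add: b_def)
  have bndb: "emeasure M {\<omega>\<in>space M. T \<omega> > ennreal (real N * h)} \<le> ennreal (b N)" for N
  proof (cases "N = 0")
    case True
    have "emeasure M {\<omega>\<in>space M. T \<omega> > ennreal (real N * h)} \<le> 1"
      by (rule emeasure_le_1)
    also have "1 \<le> ennreal (b N)" using True Cc by (simp add: b_def)
    finally show ?thesis .
  next
    case False
    then have N: "N \<ge> 1" by simp
    have "Cc / (real N)\<^sup>2 \<le> b N"
    proof -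
      have xx: "1 * real N \<le> real N * real N" using N by (intro mult_right_mono) auto
      have e1: "(real (Suc N))\<^sup>2 = real N * real N + 2 * real N + 1" by (simp add: power2_eq_square algebra_simps)
      have e2: "4 * (real N)\<^sup>2 = 4 * (real N * real N)" by (simp add: power2_eq_square)
      have "(real (Suc N))\<^sup>2 \<le> 4 * (real N)\<^sup>2" unfolding e1 e2
      proof -
        have "real N \<le> real N * real N" "real N \<ge> 1" using xx N by auto
        then show "real N * real N + 2 * real N + 1 \<le> 4 * (real N * real N)" by linarith
      qed
      then have "Cc * (real (Suc N))\<^sup>2 \<le> Cc * (4 * (real N)\<^sup>2)" using Cc by (intro mult_left_mono) auto
      then show ?thesis using N Cc by (simp add: b_def field_simps)
    qed
    then show ?thesis using bnd[OF N] by (meson ennreal_leI order_trans)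
  qed
  have Tle: "T \<omega> \<le> (\<Sum>N. ennreal h * indicator {\<omega>\<in>space M. T \<omega> > ennreal (real N * h)} \<omega>)"
    if \<omega>: "\<omega> \<in> space M" for \<omega>
  proof -
    let ?f = "\<lambda>N. ennreal h * indicator {\<omega>\<in>space M. T \<omega> > ennreal (real N * h)} \<omega>"
    have part: "ennreal (real K * h) \<le> suminf ?f" if K: "\<And>N. N < K \<Longrightarrow> T \<omega> > ennreal (real N * h)" for K
    proof -
      have "sum ?f {..<K} \<le> suminf ?f" by (rule sum_le_suminf) auto
      moreover have "sum ?f {..<K} = (\<Sum>N<K. ennreal h)" using K \<omega> by (intro sum.cong) auto
      moreover have "(\<Sum>N<K. ennreal h) = ennreal (real K * h)" using h by (simp add: ennreal_of_nat_eq_real_of_nat ennreal_mult)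
      ultimately show ?thesis by simp
    qed
    show ?thesis
    proof (cases "T \<omega>")
      case (real r)
      define K where "K = nat \<lceil>r / h\<rceil>"
      have K: "T \<omega> > ennreal (real N * h)" if "N < K" for N
      proof -
        have "int N < \<lceil>r / h\<rceil>" using that by (simp add: K_def zless_nat_eq_int_zless)
        then have "real N < r / h" by (simp add: less_ceiling_iff)
        then have "real N * h < r" using h by (simp add: field_simps)
        moreover have "0 \<le> real N * h" using h by simp
        ultimately show ?thesis using real by (auto intro!: ennreal_lessI)
      qed
      have "T \<omega> \<le> ennreal (real K * h)"
      proof -
        have "r / h \<le> real K" by (simp add: K_def) linarith
        then have "r \<le> real K * h" using h by (simp add: field_simps)
        then show ?thesis using real by (auto intro: ennreal_leI)
      qed
      also have "\<dots> \<le> suminf ?f" by (rule part[OF K])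
      finally show ?thesis .
    next
      case top
      have all: "T \<omega> > ennreal (real N * h)" for N using top by simp
      have "suminf ?f = \<top>"
      proof (rule ccontr)
        assume "suminf ?f \<noteq> \<top>"
        then obtain q where q: "suminf ?f = ennreal q" "q \<ge> 0" by (cases "suminf ?f") auto
        obtain K :: nat where "q / h < real K" using reals_Archimedean2 by blast
        then have "q < real K * h" using h by (simp add: field_simps)
        moreover have "ennreal (real K * h) \<le> ennreal q" using part[of K] all q by simp
        ultimately show False using q h by (simp add: ennreal_le_iff)
      qed
      then show ?thesis by simp
    qed
  qed
  have "(\<integral>\<^sup>+\<omega>. T \<omega> \<partial>M) \<le> (\<integral>\<^sup>+\<omega>. (\<Sum>N. ennreal h * indicator {\<omega>\<in>space M. T \<omega> > ennreal (real N * h)} \<omega>) \<partial>M)"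
    by (rule nn_integral_mono) (use Tle in auto)
  also have "\<dots> = (\<Sum>N. \<integral>\<^sup>+\<omega>. ennreal h * indicator {\<omega>\<in>space M. T \<omega> > ennreal (real N * h)} \<omega> \<partial>M)"
    by (rule nn_integral_suminf) (use Tm in measurable)
  also have "\<dots> = (\<Sum>N. ennreal h * emeasure M {\<omega>\<in>space M. T \<omega> > ennreal (real N * h)})"
    by (intro suminf_cong nn_integral_cmult_indicator) (use Tm in measurable)
  also have "\<dots> \<le> (\<Sum>N. ennreal (h * b N))"
  proof (rule suminf_le)
    fix N
    have "ennreal h * emeasure M {\<omega>\<in>space M. T \<omega> > ennreal (real N * h)} \<le> ennreal h * ennreal (b N)"
      by (rule mult_left_mono[OF bndb]) simp
    also have "\<dots> = ennreal (h * b N)" using h b0 by (simp add: ennreal_mult)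
    finally show "ennreal h * emeasure M {\<omega>\<in>space M. T \<omega> > ennreal (real N * h)} \<le> ennreal (h * b N)" .
  qed auto
  also have "\<dots> = ennreal (\<Sum>N. h * b N)"
    by (rule suminf_ennreal2) (use h b0 bsum in \<open>auto intro: summable_mult\<close>)
  also have "\<dots> < \<infinity>" by simp
  finally have fin: "(\<integral>\<^sup>+\<omega>. T \<omega> \<partial>M) < \<infinity>" .
  show ?thesis using Tm fin unfolding T_def by simp
qed

theorem corollary4p2:
  fixes M :: "'a measure" and W V :: "real \<Rightarrow> 'a \<Rightarrow> real" and m \<gamma> \<sigma> v :: real
  assumes "m > 0" and "\<gamma> > 0" and "\<sigma> > 0"
    and "wiener_process M W"
    and "langevin_solution M m \<gamma> \<sigma> v W V"
    and "1/2 * m * v\<^sup>2 > 0"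
  defines "K \<equiv> (\<lambda>t \<omega>. 1/2 * m * (V t \<omega>)\<^sup>2)"
  shows "first_zero_time K \<in> borel_measurable M
    \<and> (\<integral>\<^sup>+ \<omega>. first_zero_time K \<omega> \<partial>M) < \<infinity>
    \<and> (AE \<omega> in M. \<exists>t>0. K t \<omega> = 0)"
proof -
  have v: "v \<noteq> 0" using assms(6) by auto
  have KV: "K t \<omega> = 0 \<longleftrightarrow> V t \<omega> = 0" for t \<omega> using assms(1) by (simp add: K_def)
  have FZ: "first_zero_time K = (\<lambda>\<omega>. Inf (ennreal ` {t. t > 0 \<and> V t \<omega> = 0}))"
    by (simp add: fun_eq_iff first_zero_time_def KV)
  have mainres: "(\<lambda>\<omega>. Inf (ennreal ` {t. t > 0 \<and> V t \<omega> = 0})) \<in> borel_measurable M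
    \<and> (\<integral>\<^sup>+\<omega>. Inf (ennreal ` {t. t > 0 \<and> V t \<omega> = 0}) \<partial>M) < \<infinity>"
    by (rule main_lemma[OF assms(1-5) v])
  from mainres have Tm: "first_zero_time K \<in> borel_measurable M"
    and fin: "(\<integral>\<^sup>+ \<omega>. first_zero_time K \<omega> \<partial>M) < \<infinity>" by (simp_all add: FZ)
  have "AE \<omega> in M. first_zero_time K \<omega> \<noteq> \<infinity>"
    using nn_integral_PInf_AE[OF Tm] fin by simp
  then have "AE \<omega> in M. \<exists>t>0. K t \<omega> = 0"
  proof (rule AE_mp, intro AE_I2 impI)
    fix \<omega> assume "first_zero_time K \<omega> \<noteq> \<infinity>"
    then have "{t. t > 0 \<and> V t \<omega> = 0} \<noteq> {}" by (auto simp: FZ)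
    then show "\<exists>t>0. K t \<omega> = 0" by (auto simp: KV)
  qed
  with Tm fin show ?thesis by blast
qed

end
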